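(* (Equivalence of CPL* natural deduction and the focused sequent calculus.) Fix a set $W$ of worlds with a converse well-founded accessibility relation $\prec$. For every (unpolarized) context $\Gamma$, proposition $A$ and world $w$: $\Gamma \vdash_{\mathbf{CPL*}} A[w]$ if and only if the inversion sequent $\Gamma^{\circledcirc}; \cdot \Longrightarrow A^{\ominus}[w]$ is derivable in the focused sequent calculus.
   Context: Fix a set $W$ of worlds and a binary relation $\prec$ on $W$ that is converse well-founded (no infinite chain $w_0\prec w_1\prec\cdots$); $\prec^*$ is its reflexive–transitive closure. Atomic propositions are each designated either positive ($Q^+$) or negative ($Q^-$). Unpolarized propositions: $A,B,C ::= Q \mid \bot \mid A\supset B \mid \Diamond A \mid \Box A$; an unpolarized context $\Gamma$ is a finite collection of judgments $A[w]$. Natural deduction $\Gamma \vdash_{\mathbf{CPL*}} A[w]$, defined one world at a time (provability at $w$ after provability at all worlds reachable from $w$ by one or more $\prec$-steps) as the least relation closed under: (hyp) $\Gamma, A[w]\vdash A[w]$; ($\bot E$) $w'\prec^* w$ and $\Gamma\vdash\bot[w]$ imply $\Gamma\vdash C[w']$; ($\supset I$) $\Gamma,A[w]\vdash B[w]$ implies $\Gamma\vdash A\supset B[w]$; ($\supset E$) $\Gamma\vdash A\supset B[w]$ and $\Gamma\vdash A[w]$ imply $\Gamma\vdash B[w]$; ($\Diamond I$) $w\prec w'$ and $\Gamma\vdash A[w']$ imply $\Gamma\vdash\Diamond A[w]$; ($\Box I$) if $\Gamma\vdash A[w']$ for all $w'$ with $w\prec w'$ then $\Gamma\vdash\Box A[w]$;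 ($\Diamond E$) if $w''\prec^* w$, $\Gamma\vdash\Diamond A[w]$, and for all $w'$ with $w\prec w'$, $\Gamma\vdash A[w']$ implies $\Gamma\vdash C[w'']$, then $\Gamma\vdash C[w'']$; ($\Box E$) if $w''\prec^* w$, $\Gamma\vdash\Box A[w]$, and ($\Gamma\vdash A[w']$ for all $w'$ with $w\prec w'$) implies $\Gamma\vdash C[w'']$, then $\Gamma\vdash C[w'']$. Polarized propositions: $A^+ ::= Q^+ \mid {\downarrow}A^- \mid \bot \mid \Diamond A^+ \mid \Box A^+$ and $A^- ::= Q^- \mid {\uparrow}A^+ \mid A^+ \supset B^-$. $Q^+$ and ${\downarrow}A^-$ are $\mathit{stable}^+$; $Q^-$ and ${\uparrow}A^+$ are $\mathit{stable}^-$. In the focused calculus, $\Gamma$ is a finite collection of judgments $A^+[w]$ and the inversion context $\Omega$ is either empty ($\cdot$) or a single $A^+[w]$. There are three mutually defined judgments — right focus $\Gamma \vdash [A^+[w]]$, inversion $\Gamma;\Omega \Longrightarrow C^-[w]$, and left focus $\Gamma;[A^-[w']] \Longrightarrow C^-[w]$ — defined one world at a time (well-founded by converse well-foundedness), as the least relations closed under: Right focus: ($QR^+$) $\Gamma, Q^+[w] \vdash [Q^+[w]]$; (${\downarrow}R$) $\Gamma;\cdot\Longrightarrow A^-[w]$ implies $\Gamma\vdash[{\downarrow}A^-[w]]$; ($\Diamond R$) $w\prec w'$ and $\Gamma;\cdot\Longrightarrow {\uparrow}A^+[w']$ imply $\Gamma\vdash[\Diamond A^+[w]]$; ($\Box R$)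 if $\Gamma;\cdot\Longrightarrow{\uparrow}A^+[w']$ for all $w'$ with $w\prec w'$, then $\Gamma\vdash[\Box A^+[w]]$. Inversion: ($\supset R$) $\Gamma;A^+[w]\Longrightarrow B^-[w]$ implies $\Gamma;\cdot\Longrightarrow A^+\supset B^-[w]$; ($L$) if $A^+$ is $\mathit{stable}^+$ and $\Gamma, A^+[w'];\cdot\Longrightarrow C^-[w]$, then $\Gamma; A^+[w']\Longrightarrow C^-[w]$; (${\downarrow}L$) if $C^-$ is $\mathit{stable}^-$, $w\prec^* w'$, and $\Gamma,{\downarrow}A^-[w'];[A^-[w']]\Longrightarrow C^-[w]$, then $\Gamma,{\downarrow}A^-[w'];\cdot\Longrightarrow C^-[w]$; ($\bot L$) $\Gamma;\bot[w']\Longrightarrow C^-[w]$; ($\Diamond L$) if for all $w$ with $w'\prec w$, $\Gamma;\cdot\Longrightarrow{\uparrow}A^+[w]$ implies $\Gamma;\cdot\Longrightarrow C^-[w'']$, then $\Gamma;\Diamond A^+[w']\Longrightarrow C^-[w'']$; ($\Box L$) if ($\Gamma;\cdot\Longrightarrow{\uparrow}A^+[w]$ for all $w$ with $w'\prec w$) implies $\Gamma;\cdot\Longrightarrow C^-[w'']$, then $\Gamma;\Box A^+[w']\Longrightarrow C^-[w'']$; (${\uparrow}R$) $\Gamma\vdash[A^+[w]]$ implies $\Gamma;\cdot\Longrightarrow{\uparrow}A^+[w]$. Left focus: ($QL^-$) $\Gamma;[Q^-[w]]\Longrightarrow Q^-[w]$; (${\uparrow}L$) $\Gamma;A^+[w']\Longrightarrow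 C^-[w]$ implies $\Gamma;[{\uparrow}A^+[w']]\Longrightarrow C^-[w]$; ($\supset L$) $\Gamma\vdash[A^+[w']]$ and $\Gamma;[B^-[w']]\Longrightarrow C^-[w]$ imply $\Gamma;[A^+\supset B^-[w']]\Longrightarrow C^-[w]$. Polarization: $(Q^+)^\oplus=Q^+$, $(\bot)^\oplus=\bot$, $(\Diamond A)^\oplus=\Diamond A^\oplus$, $(\Box A)^\oplus=\Box A^\oplus$, $(Q^-)^\oplus={\downarrow}Q^-$, $(A\supset B)^\oplus={\downarrow}(A^\oplus\supset B^\ominus)$; $(Q^+)^\ominus={\uparrow}Q^+$, $(\bot)^\ominus={\uparrow}\bot$, $(\Diamond A)^\ominus={\uparrow}(\Diamond A^\oplus)$, $(\Box A)^\ominus={\uparrow}(\Box A^\oplus)$, $(Q^-)^\ominus=Q^-$, $(A\supset B)^\ominus=A^\oplus\supset B^\ominus$. Contexts: $(\cdot)^\circledcirc=\cdot$, $(\Gamma,Q^+[w])^\circledcirc=\Gamma^\circledcirc,Q^+[w]$, $(\Gamma,\bot[w])^\circledcirc=\Gamma^\circledcirc,{\downarrow}{\uparrow}\bot[w]$, $(\Gamma,\Diamond A[w])^\circledcirc=\Gamma^\circledcirc,{\downarrow}{\uparrow}(\Diamond A^\oplus)[w]$, $(\Gamma,\Box A[w])^\circledcirc=\Gamma^\circledcirc,{\downarrow}{\uparrow}(\Box A^\oplus)[w]$, $(\Gamma,Q^-[w])^\circledcirc=\Gamma^\circledcirc,{\downarrow}Q^-[w]$, $(\Gamma,A\supset B[w])^\circledcirc=\Gamma^\circledcirc,{\downarrow}(A^\oplus\supset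 B^\ominus)[w]$. *)

theory Defs
  imports Main
begin

datatype 'a uprop =
    PAtom 'a
  | NAtom 'a
  | UBot
  | UImp "'a uprop" "'a uprop"
  | UDia "'a uprop"
  | UBox "'a uprop"

datatype 'a ppos =
    PQ 'a
  | Down "'a pneg"
  | PBot
  | PDia "'a ppos"
  | PBox "'a ppos"
and 'a pneg =
    NQ 'a
  | Up "'a ppos"
  | PImp "'a ppos" "'a pneg"

fun stable_pos :: "'a ppos \<Rightarrow> bool" where
  "stable_pos (PQ q) = True"
| "stable_pos (Down A) = True"
| "stable_pos _ = False"

fun stable_neg :: "'a pneg \<Rightarrow> bool" where
  "stable_neg (NQ q) = True"
| "stable_neg (Up A) = True"
| "stable_neg _ = False"

text \<open>Contexts are finite collections of judgments, represented as lists
  (only membership and extension are used by the rules).\<close>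
type_synonym ('a, 'w) uctx = "('a uprop \<times> 'w) list"
type_synonym ('a, 'w) pctx = "('a ppos \<times> 'w) list"

text \<open>One stage of the definition: the least relation closed under the rules,
  where the (negatively occurring) provability judgments at strictly later
  worlds in the rules Dia-E and Box-E are given by the oracle P.\<close>
inductive nd_step ::
  "('w \<Rightarrow> 'w \<Rightarrow> bool) \<Rightarrow> (('a, 'w) uctx \<Rightarrow> 'a uprop \<Rightarrow> 'w \<Rightarrow> bool)
   \<Rightarrow> ('a, 'w) uctx \<Rightarrow> 'a uprop \<Rightarrow> 'w \<Rightarrow> bool"
  for R :: "'w \<Rightarrow> 'w \<Rightarrow> bool" and P :: "('a, 'w) uctx \<Rightarrow> 'a uprop \<Rightarrow> 'w \<Rightarrow> bool"
where
  nd_hyp: "(A, w) \<in> set \<Gamma> \<Longrightarrow> nd_step R P \<Gamma> A w"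
| nd_botE: "R\<^sup>*\<^sup>* w' w \<Longrightarrow> nd_step R P \<Gamma> UBot w \<Longrightarrow> nd_step R P \<Gamma> C w'"
| nd_impI: "nd_step R P ((A, w) # \<Gamma>) B w \<Longrightarrow> nd_step R P \<Gamma> (UImp A B) w"
| nd_impE: "nd_step R P \<Gamma> (UImp A B) w \<Longrightarrow> nd_step R P \<Gamma> A w \<Longrightarrow> nd_step R P \<Gamma> B w"
| nd_diaI: "R w w' \<Longrightarrow> nd_step R P \<Gamma> A w' \<Longrightarrow> nd_step R P \<Gamma> (UDia A) w"
| nd_boxI: "(\<forall>w'. R w w' \<longrightarrow> nd_step R P \<Gamma> A w') \<Longrightarrow> nd_step R P \<Gamma> (UBox A) w"
| nd_diaE: "R\<^sup>*\<^sup>* w'' w \<Longrightarrow> nd_step R P \<Gamma> (UDia A) w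
            \<Longrightarrow> (\<forall>w'. R w w' \<longrightarrow> P \<Gamma> A w' \<longrightarrow> nd_step R P \<Gamma> C w'')
            \<Longrightarrow> nd_step R P \<Gamma> C w''"
| nd_boxE: "R\<^sup>*\<^sup>* w'' w \<Longrightarrow> nd_step R P \<Gamma> (UBox A) w
            \<Longrightarrow> ((\<forall>w'. R w w' \<longrightarrow> P \<Gamma> A w') \<longrightarrow> nd_step R P \<Gamma> C w'')
            \<Longrightarrow> nd_step R P \<Gamma> C w''"

text \<open>The world-by-world definition: provability at w is the stage at
  w, whose oracle is provability at the worlds strictly reachable from
  w (well-founded recursion along the converse of the transitive
  closure of the accessibility relation).\<close>
definition later_rel :: "('w \<Rightarrow> 'w \<Rightarrow> bool) \<Rightarrow> ('w \<times> 'w) set" where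
  "later_rel R = {(v, w). R\<^sup>+\<^sup>+ w v}"

definition nd_world :: "('w \<Rightarrow> 'w \<Rightarrow> bool) \<Rightarrow> 'w \<Rightarrow> ('a, 'w) uctx \<Rightarrow> 'a uprop \<Rightarrow> bool" where
  "nd_world R = wfrec (later_rel R)
     (\<lambda>rec w \<Gamma> A. nd_step R (\<lambda>\<Gamma>' A' v. R\<^sup>+\<^sup>+ w v \<and> rec v \<Gamma>' A') \<Gamma> A w)"

definition ND :: "('w \<Rightarrow> 'w \<Rightarrow> bool) \<Rightarrow> ('a, 'w) uctx \<Rightarrow> 'a uprop \<Rightarrow> 'w \<Rightarrow> bool" where
  "ND R \<Gamma> A w = nd_world R w \<Gamma> A"

text \<open>One stage: right focus rfoc, inversion finv (with
  inversion context "\<Omega> :: ('a ppos \<times> 'w) option"), left focus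
  lfoc. The oracle P gives the inversion judgments
  "\<Gamma>; \<cdot> \<Longrightarrow> C-[w]" used negatively in Dia-L and Box-L.\<close>
inductive
  rfoc :: "('w \<Rightarrow> 'w \<Rightarrow> bool) \<Rightarrow> (('a, 'w) pctx \<Rightarrow> 'a pneg \<Rightarrow> 'w \<Rightarrow> bool)
           \<Rightarrow> ('a, 'w) pctx \<Rightarrow> 'a ppos \<Rightarrow> 'w \<Rightarrow> bool"
and
  finv :: "('w \<Rightarrow> 'w \<Rightarrow> bool) \<Rightarrow> (('a, 'w) pctx \<Rightarrow> 'a pneg \<Rightarrow> 'w \<Rightarrow> bool)
           \<Rightarrow> ('a, 'w) pctx \<Rightarrow> ('a ppos \<times> 'w) option \<Rightarrow> 'a pneg \<Rightarrow> 'w \<Rightarrow> bool"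
and
  lfoc :: "('w \<Rightarrow> 'w \<Rightarrow> bool) \<Rightarrow> (('a, 'w) pctx \<Rightarrow> 'a pneg \<Rightarrow> 'w \<Rightarrow> bool)
           \<Rightarrow> ('a, 'w) pctx \<Rightarrow> 'a pneg \<times> 'w \<Rightarrow> 'a pneg \<Rightarrow> 'w \<Rightarrow> bool"
  for R :: "'w \<Rightarrow> 'w \<Rightarrow> bool" and P :: "('a, 'w) pctx \<Rightarrow> 'a pneg \<Rightarrow> 'w \<Rightarrow> bool"
where
  QR: "(PQ q, w) \<in> set \<Gamma> \<Longrightarrow> rfoc R P \<Gamma> (PQ q) w"
| DownR: "finv R P \<Gamma> None A w \<Longrightarrow> rfoc R P \<Gamma> (Down A) w"
| DiaR: "R w w' \<Longrightarrow> finv R P \<Gamma> None (Up A) w' \<Longrightarrow> rfoc R P \<Gamma> (PDia A) w"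
| BoxR: "(\<forall>w'. R w w' \<longrightarrow> finv R P \<Gamma> None (Up A) w') \<Longrightarrow> rfoc R P \<Gamma> (PBox A) w"
| ImpR: "finv R P \<Gamma> (Some (A, w)) B w \<Longrightarrow> finv R P \<Gamma> None (PImp A B) w"
| L: "stable_pos A \<Longrightarrow> finv R P ((A, w') # \<Gamma>) None C w \<Longrightarrow> finv R P \<Gamma> (Some (A, w')) C w"
| DownL: "stable_neg C \<Longrightarrow> R\<^sup>*\<^sup>* w w' \<Longrightarrow> (Down A, w') \<in> set \<Gamma>
          \<Longrightarrow> lfoc R P \<Gamma> (A, w') C w \<Longrightarrow> finv R P \<Gamma> None C w"
| BotL: "finv R P \<Gamma> (Some (PBot, w')) C w"
| DiaL: "(\<forall>w. R w' w \<longrightarrow> P \<Gamma> (Up A) w \<longrightarrow> finv R P \<Gamma> None C w'')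
         \<Longrightarrow> finv R P \<Gamma> (Some (PDia A, w')) C w''"
| BoxL: "((\<forall>w. R w' w \<longrightarrow> P \<Gamma> (Up A) w) \<longrightarrow> finv R P \<Gamma> None C w'')
         \<Longrightarrow> finv R P \<Gamma> (Some (PBox A, w')) C w''"
| UpR: "rfoc R P \<Gamma> A w \<Longrightarrow> finv R P \<Gamma> None (Up A) w"
| QL: "lfoc R P \<Gamma> (NQ q, w) (NQ q) w"
| UpL: "finv R P \<Gamma> (Some (A, w')) C w \<Longrightarrow> lfoc R P \<Gamma> (Up A, w') C w"
| ImpL: "rfoc R P \<Gamma> A w' \<Longrightarrow> lfoc R P \<Gamma> (B, w') C w \<Longrightarrow> lfoc R P \<Gamma> (PImp A B, w') C w"

definition foc_world :: "('w \<Rightarrow> 'w \<Rightarrow> bool) \<Rightarrow> 'w \<Rightarrow> ('a, 'w) pctx \<Rightarrow> 'a pneg \<Rightarrow> bool" where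
  "foc_world R = wfrec (later_rel R)
     (\<lambda>rec w \<Gamma> C. finv R (\<lambda>\<Gamma>' C' v. R\<^sup>+\<^sup>+ w v \<and> rec v \<Gamma>' C') \<Gamma> None C w)"

definition FInv :: "('w \<Rightarrow> 'w \<Rightarrow> bool) \<Rightarrow> ('a, 'w) pctx \<Rightarrow> 'a pneg \<Rightarrow> 'w \<Rightarrow> bool" where
  "FInv R \<Gamma> C w = foc_world R w \<Gamma> C"

fun polp :: "'a uprop \<Rightarrow> 'a ppos" and poln :: "'a uprop \<Rightarrow> 'a pneg" where
  "polp (PAtom q) = PQ q"
| "polp UBot = PBot"
| "polp (UDia A) = PDia (polp A)"
| "polp (UBox A) = PBox (polp A)"
| "polp (NAtom q) = Down (NQ q)"
| "polp (UImp A B) = Down (PImp (polp A) (poln B))"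
| "poln (PAtom q) = Up (PQ q)"
| "poln UBot = Up PBot"
| "poln (UDia A) = Up (PDia (polp A))"
| "poln (UBox A) = Up (PBox (polp A))"
| "poln (NAtom q) = NQ q"
| "poln (UImp A B) = PImp (polp A) (poln B)"

fun polc_elem :: "'a uprop \<Rightarrow> 'a ppos" where
  "polc_elem (PAtom q) = PQ q"
| "polc_elem UBot = Down (Up PBot)"
| "polc_elem (UDia A) = Down (Up (PDia (polp A)))"
| "polc_elem (UBox A) = Down (Up (PBox (polp A)))"
| "polc_elem (NAtom q) = Down (NQ q)"
| "polc_elem (UImp A B) = Down (PImp (polp A) (poln B))"

definition polc :: "('a, 'w) uctx \<Rightarrow> ('a, 'w) pctx" where
  "polc \<Gamma> = map (\<lambda>(A, w). (polc_elem A, w)) \<Gamma>"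

end

theory Submission
  imports Defs
begin

section \<open>Single-world focused calculus\<close>

datatype 'a sp = SQ 'a | SDown "'a sn" | SBot | STop
and 'a sn = SNQ 'a | SUp "'a sp" | SImp "'a sp" "'a sn"

fun sstp :: "'a sp \<Rightarrow> bool" where
  "sstp (SQ q) = True" | "sstp (SDown N) = True" | "sstp SBot = False" | "sstp STop = False"

fun sstn :: "'a sn \<Rightarrow> bool" where
  "sstn (SNQ q) = True" | "sstn (SUp A) = True" | "sstn (SImp A B) = False"

inductive srf :: "'a sp list \<Rightarrow> 'a sp \<Rightarrow> bool"
  and sfi :: "'a sp list \<Rightarrow> 'a sp option \<Rightarrow> 'a sn \<Rightarrow> bool"
  and slf :: "'a sp list \<Rightarrow> 'a sn \<Rightarrow> 'a sn \<Rightarrow> bool"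
where
  sQR: "SQ q \<in> set G \<Longrightarrow> srf G (SQ q)"
| sDownR: "sfi G None N \<Longrightarrow> srf G (SDown N)"
| sTR: "srf G STop"
| sImpR: "sfi G (Some A) B \<Longrightarrow> sfi G None (SImp A B)"
| sL: "sstp A \<Longrightarrow> sfi (A # G) None C \<Longrightarrow> sfi G (Some A) C"
| sDownL: "sstn C \<Longrightarrow> SDown N \<in> set G \<Longrightarrow> slf G N C \<Longrightarrow> sfi G None C"
| sBotL: "sfi G (Some SBot) C"
| sTL: "sfi G None C \<Longrightarrow> sfi G (Some STop) C"
| sUpR: "srf G A \<Longrightarrow> sfi G None (SUp A)"
| sQL: "slf G (SNQ q) (SNQ q)"
| sUpL: "sfi G (Some A) C \<Longrightarrow> slf G (SUp A) C"
| sImpL: "srf G A \<Longrightarrow> slf G B C \<Longrightarrow> slf G (SImp A B) C"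

inductive_cases srfE: "srf G A"
inductive_cases sfiSomeE: "sfi G (Some A) C"
inductive_cases sfiNoneE: "sfi G None C"
inductive_cases slfE: "slf G N C"

lemma sweak:
  "srf G A \<Longrightarrow> set G \<subseteq> set G' \<Longrightarrow> srf G' A"
  "sfi G Om C \<Longrightarrow> set G \<subseteq> set G' \<Longrightarrow> sfi G' Om C"
  "slf G N C \<Longrightarrow> set G \<subseteq> set G' \<Longrightarrow> slf G' N C"
proof (induction arbitrary: G' and G' and G' rule: srf_sfi_slf.inducts)
  case (sL A G C)
  have "sfi (A # G') None C" using sL(3)[of "A # G'"] sL(4) by auto
  then show ?case using sL(1) by (blast intro: srf_sfi_slf.sL)
qed (auto intro: srf_sfi_slf.intros)

lemma sfi_Some_stable: "sfi G (Some A) C \<Longrightarrow> sstp A \<Longrightarrow> sfi (A # G) None C"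
  by (erule sfiSomeE) auto

lemma sfi_Some_top: "sfi G (Some STop) C \<Longrightarrow> sfi G None C"
  by (erule sfiSomeE) auto

fun psz :: "'a sp \<Rightarrow> nat" and nsz :: "'a sn \<Rightarrow> nat" where
  "psz (SQ q) = 1" | "psz (SDown N) = Suc (nsz N)" | "psz SBot = 1" | "psz STop = 1"
| "nsz (SNQ q) = 1" | "nsz (SUp A) = Suc (psz A)" | "nsz (SImp A B) = Suc (psz A + nsz B)"

lemma psz_pos: "psz A \<ge> 1"
  by (cases A) auto
lemma nsz_pos: "nsz N \<ge> 1"
  by (cases N) auto

definition cut1 :: "'a sp \<Rightarrow> bool" where
  "cut1 A \<longleftrightarrow> (\<forall>G C. srf G A \<longrightarrow> sfi G (Some A) C \<longrightarrow> sfi G None C)"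
definition cut2 :: "'a sn \<Rightarrow> bool" where
  "cut2 N \<longleftrightarrow> (\<forall>G C. sfi G None N \<longrightarrow> slf G N C \<longrightarrow> sfi G None C)"
definition cut3 :: "'a sn \<Rightarrow> bool" where
  "cut3 N \<longleftrightarrow> (\<forall>G H Om C. sfi G None N \<longrightarrow> set H \<subseteq> insert (SDown N) (set G) \<longrightarrow> sfi H Om C \<longrightarrow> sfi G Om C)"
definition cut4 :: "'a sp \<Rightarrow> bool" where
  "cut4 A \<longleftrightarrow> (\<forall>G C. sfi G None (SUp A) \<longrightarrow> sfi G (Some A) C \<longrightarrow> sfi G None C)"

lemma c3_aux:
  assumes c2: "cut2 N"
  shows "srf H A \<Longrightarrow> (\<forall>G. sfi G None N \<longrightarrow> set H \<subseteq> insert (SDown N) (set G) \<longrightarrow> srf G A)"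
    and "sfi H Om C \<Longrightarrow> (\<forall>G. sfi G None N \<longrightarrow> set H \<subseteq> insert (SDown N) (set G) \<longrightarrow> sfi G Om C)"
    and "slf H M C \<Longrightarrow> (\<forall>G. sfi G None N \<longrightarrow> set H \<subseteq> insert (SDown N) (set G) \<longrightarrow> slf G M C)"
proof (induction rule: srf_sfi_slf.inducts)
  case (sL A H C)
  show ?case
  proof (intro allI impI)
    fix G assume a: "sfi G None N" "set (H) \<subseteq> insert (SDown N) (set G)"
    have "sfi (A # G) None N" using a(1) by (rule sweak(2)) auto
    moreover have "set (A # H) \<subseteq> insert (SDown N) (set (A # G))" using a(2) by auto
    ultimately have "sfi (A # G) None C" using sL by blast
    then show "sfi G (Some A) C" using sL by (blast intro: srf_sfi_slf.sL)
  qed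
next
  case (sDownL C M H)
  show ?case
  proof (intro allI impI)
    fix G assume a: "sfi G None N" "set H \<subseteq> insert (SDown N) (set G)"
    have l: "slf G M C" using sDownL a by blast
    show "sfi G None C"
    proof (cases "M = N")
      case True
      then show ?thesis using c2 a(1) l unfolding cut2_def by blast
    next
      case False
      then have "SDown M \<in> set G" using sDownL a by auto
      then show ?thesis using sDownL(1) l by (blast intro: srf_sfi_slf.sDownL)
    qed
  qed
qed (auto intro: srf_sfi_slf.intros)

lemma c3: "cut2 N \<Longrightarrow> cut3 N"
  unfolding cut3_def using c3_aux(2) by blast

lemma c2:
  fixes N :: "'a sn"
  assumes "\<forall>A::'a sp. psz A < nsz N \<longrightarrow> cut1 A \<and> cut4 A" "\<forall>N'::'a sn. nsz N' < nsz N \<longrightarrow> cut2 N'"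
  shows "cut2 N"
  unfolding cut2_def
proof (intro allI impI)
  fix G :: "'a sp list" and C :: "'a sn" assume l: "sfi G None N" and r: "slf G N C"
  show "sfi G None C"
  proof (cases N)
    case (SNQ q)
    then show ?thesis using l r by (auto elim: slfE)
  next
    case (SUp A)
    then have "sfi G (Some A) C" using r by (auto elim: slfE)
    moreover have "psz A < nsz N" using SUp by simp
    then have "cut4 A" using assms(1) by blast
    ultimately show ?thesis using l SUp unfolding cut4_def by blast
  next
    case (SImp A B)
    have l': "sfi G (Some A) B" using l SImp by (auto elim: sfiNoneE)
    have r1: "srf G A" and r2: "slf G B C" using r SImp by (auto elim: slfE)
    have "cut1 A" "cut2 B" using assms SImp by auto
    then show ?thesis using l' r1 r2 unfolding cut1_def cut2_def by blast
  qed
qed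

lemma c1:
  fixes A :: "'a sp"
  assumes "\<forall>N::'a sn. nsz N < psz A \<longrightarrow> cut3 N"
  shows "cut1 A"
  unfolding cut1_def
proof (intro allI impI)
  fix G :: "'a sp list" and C :: "'a sn" assume l: "srf G A" and r: "sfi G (Some A) C"
  show "sfi G None C"
  proof (cases A)
    case (SQ q)
    then have "SQ q \<in> set G" using l by (auto elim: srfE)
    moreover have "sfi (SQ q # G) None C" using sfi_Some_stable[OF r[unfolded SQ]] by simp
    ultimately show ?thesis by (rule_tac sweak(2)) auto
  next
    case (SDown N)
    then have "sfi G None N" using l by (auto elim: srfE)
    moreover have "sfi (SDown N # G) None C" using sfi_Some_stable[OF r[unfolded SDown]] by simp
    moreover have "nsz N < psz A" using SDown by simp
    then have "cut3 N" using assms by blast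
    ultimately show ?thesis unfolding cut3_def by (metis list.set(2) order_refl)
  next
    case SBot
    then show ?thesis using l by (auto elim: srfE)
  next
    case STop
    then show ?thesis using r sfi_Some_top by auto
  qed
qed

lemma c4a:
  assumes c1: "cut1 A" and st: "sstn C"
  shows "srf G X \<Longrightarrow> True"
    and "sfi G Om D \<Longrightarrow> D = SUp A \<Longrightarrow> (\<forall>G'. set G \<subseteq> set G' \<longrightarrow> sfi G' (Some A) C) \<Longrightarrow> sfi G Om C"
    and "slf G M D \<Longrightarrow> D = SUp A \<Longrightarrow> (\<forall>G'. set G \<subseteq> set G' \<longrightarrow> sfi G' (Some A) C) \<Longrightarrow> slf G M C"
proof (induction rule: srf_sfi_slf.inducts)
  case (sL B G D)
  have "\<forall>G'. set (B # G) \<subseteq> set G' \<longrightarrow> sfi G' (Some A) C" using sL(5) by auto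
  then have "sfi (B # G) None C" using sL by blast
  then show ?case using sL(1) by (blast intro: srf_sfi_slf.sL)
next
  case (sDownL D N G)
  then have "slf G N C" by blast
  then show ?case using st sDownL(2) by (blast intro: srf_sfi_slf.sDownL)
next
  case (sUpR G A')
  then show ?case using c1 unfolding cut1_def by blast
qed (auto intro: srf_sfi_slf.intros)

lemma inv_imp_st:
  shows "srf G X \<Longrightarrow> True"
    and "sfi G Om D \<Longrightarrow> D = SImp C1 C2 \<Longrightarrow> sstp C1 \<Longrightarrow> sfi (C1 # G) Om C2"
    and "slf G M D \<Longrightarrow> True"
proof (induction rule: srf_sfi_slf.inducts)
  case (sImpR G A B)
  then show ?case using sfi_Some_stable by blast
next
  case (sL A G C)
  then have "sfi (C1 # A # G) None C2" by blast
  then have "sfi (A # C1 # G) None C2" by (rule sweak(2)) auto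
  then show ?case using sL(1) by (blast intro: srf_sfi_slf.sL)
qed (auto intro: srf_sfi_slf.intros)

lemma inv_imp_top:
  shows "srf G X \<Longrightarrow> True"
    and "sfi G Om D \<Longrightarrow> D = SImp STop C2 \<Longrightarrow> sfi G Om C2"
    and "slf G M D \<Longrightarrow> True"
proof (induction rule: srf_sfi_slf.inducts)
  case (sImpR G A B)
  then show ?case using sfi_Some_top by blast
qed (auto intro: srf_sfi_slf.intros)

lemma c4_st: "cut1 A \<Longrightarrow> sstn C \<Longrightarrow> sfi G None (SUp A) \<Longrightarrow> sfi G (Some A) C \<Longrightarrow> sfi G None C"
proof -
  assume a: "cut1 A" "sstn C" "sfi G None (SUp A)" "sfi G (Some A) C"
  have "\<forall>G'. set G \<subseteq> set G' \<longrightarrow> sfi G' (Some A) C" using a(4) sweak(2) by blast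
  then show ?thesis using c4a(2)[OF a(1,2) a(3) refl] by blast
qed

lemma c4b: "cut1 A \<Longrightarrow> sfi G None (SUp A) \<Longrightarrow> sfi G (Some A) C \<Longrightarrow> sfi G None C"
proof (induction C arbitrary: G rule: sn.induct[where ?P1.0="\<lambda>_. True"])
  case (SNQ q)
  show ?case using c4_st[OF SNQ(1) _ SNQ(2) SNQ(3)] by simp
next
  case (SUp B)
  show ?case using c4_st[OF SUp(2) _ SUp(3) SUp(4)] by simp
next
  case (SQ q) show ?case by simp
next
  case (SDown N) show ?case by simp
next
  case SBot show ?case by simp
next
  case STop show ?case by simp
next
  case (SImp C1 C2)
  show ?case
  proof (cases C1)
    case (SQ q)
    then have r: "sfi (C1 # G) (Some A) C2" using inv_imp_st(2)[OF SImp(5) refl] by simp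
    have l: "sfi (C1 # G) None (SUp A)" using SImp(4) by (rule sweak(2)) auto
    have "sfi (C1 # G) None C2" using SImp(2)[OF SImp(3) l r] .
    then have "sfi G (Some C1) C2" using SQ by (intro sL) auto
    then show ?thesis using SQ by (auto intro: sImpR)
  next
    case (SDown N)
    then have r: "sfi (C1 # G) (Some A) C2" using inv_imp_st(2)[OF SImp(5) refl] by simp
    have l: "sfi (C1 # G) None (SUp A)" using SImp(4) by (rule sweak(2)) auto
    have "sfi (C1 # G) None C2" using SImp(2)[OF SImp(3) l r] .
    then have "sfi G (Some C1) C2" using SDown by (intro sL) auto
    then show ?thesis using SDown by (auto intro: sImpR)
  next
    case SBot
    then show ?thesis by (auto intro: srf_sfi_slf.intros)
  next
    case STop
    then have r: "sfi G (Some A) C2" using inv_imp_top(2)[OF SImp(5)] by simp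
    have "sfi G None C2" using SImp(2)[OF SImp(3) SImp(4) r] .
    then have "sfi G (Some C1) C2" using STop by (auto intro: sTL)
    then show ?thesis using STop by (auto intro: sImpR)
  qed
qed

lemma c4: "cut1 A \<Longrightarrow> cut4 A"
  unfolding cut4_def using c4b by blast

lemma cut_all: "(\<forall>A :: 'a sp. psz A \<le> n \<longrightarrow> cut1 A \<and> cut4 A) \<and> (\<forall>N :: 'a sn. nsz N \<le> n \<longrightarrow> cut2 N \<and> cut3 N)"
proof (induction n)
  case 0
  then show ?case using psz_pos nsz_pos by (metis le_zero_eq not_one_le_zero)
next
  case (Suc n)
  have C2: "cut2 N" if "nsz N \<le> Suc n" for N :: "'a sn"
  proof (rule c2)
    show "\<forall>A::'a sp. psz A < nsz N \<longrightarrow> cut1 A \<and> cut4 A"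
    proof (intro allI impI)
      fix A :: "'a sp" assume "psz A < nsz N"
      then have "psz A \<le> n" using that by linarith
      then show "cut1 A \<and> cut4 A" using Suc by blast
    qed
    show "\<forall>N'::'a sn. nsz N' < nsz N \<longrightarrow> cut2 N'"
    proof (intro allI impI)
      fix N' :: "'a sn" assume "nsz N' < nsz N"
      then have "nsz N' \<le> n" using that by linarith
      then show "cut2 N'" using Suc by blast
    qed
  qed
  have C3: "cut3 N" if "nsz N \<le> Suc n" for N :: "'a sn"
    using C2[OF that] by (rule c3)
  have C1: "cut1 A" if "psz A \<le> Suc n" for A :: "'a sp"
  proof (rule c1)
    show "\<forall>N::'a sn. nsz N < psz A \<longrightarrow> cut3 N"
    proof (intro allI impI)
      fix N :: "'a sn" assume "nsz N < psz A"
      then have "nsz N \<le> n" using that by linarith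
      then show "cut3 N" using Suc by blast
    qed
  qed
  show ?case using C1 C2 C3 c4 by blast
qed

lemma cut1_all: "cut1 A" and cut2_all: "cut2 N" and cut3_all: "cut3 N" and cut4_all: "cut4 A"
  using cut_all[of "psz A"] cut_all[of "nsz N"] by auto

lemma s_cut1: "srf G A \<Longrightarrow> sfi G (Some A) C \<Longrightarrow> sfi G None C"
  using cut1_all unfolding cut1_def by blast
lemma s_cut3: "sfi G None N \<Longrightarrow> sfi (SDown N # G) Om C \<Longrightarrow> sfi G Om C"
  using cut3_all unfolding cut3_def by (metis list.set(2) order_refl)
lemma s_cut4: "sfi G None (SUp A) \<Longrightarrow> sfi G (Some A) C \<Longrightarrow> sfi G None C"
  using cut4_all unfolding cut4_def by blast

lemma s_explode: "sfi G None (SUp SBot) \<Longrightarrow> sfi G None C"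
  using s_cut4 sBotL by blast

definition IdP :: "'a sp \<Rightarrow> bool" where
  "IdP A \<longleftrightarrow> (\<forall>G C. (\<forall>G'. set G \<subseteq> set G' \<longrightarrow> srf G' A \<longrightarrow> sfi G' None C) \<longrightarrow> sfi G (Some A) C)"
definition IdN :: "'a sn \<Rightarrow> bool" where
  "IdN N \<longleftrightarrow> (\<forall>G. (\<forall>G' C. set G \<subseteq> set G' \<longrightarrow> sstn C \<longrightarrow> slf G' N C \<longrightarrow> sfi G' None C) \<longrightarrow> sfi G None N)"

lemma sidc0: "IdP (SQ (q::'a))"
proof -
  show "IdP (SQ q)" unfolding IdP_def
  proof (intro allI impI)
    fix G :: "'a sp list" and C :: "'a sn" assume h: "\<forall>G'. set G \<subseteq> set G' \<longrightarrow> srf G' (SQ q) \<longrightarrow> sfi G' None C"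
    have "srf (SQ q # G) (SQ q)" by (rule sQR) simp
    then have "sfi (SQ q # G) None C" using h[rule_format, of "SQ q # G"] by auto
    then show "sfi G (Some (SQ q)) C" by (intro sL) auto
  qed
qed

lemma sidc1: "IdN (N::'a sn) \<Longrightarrow> IdP (SDown N)"
proof -
  assume ih: "IdN N"
  show "IdP (SDown N)" unfolding IdP_def
  proof (intro allI impI)
    fix G :: "'a sp list" and C :: "'a sn" assume h: "\<forall>G'. set G \<subseteq> set G' \<longrightarrow> srf G' (SDown N) \<longrightarrow> sfi G' None C"
    have "\<forall>G' C. set (SDown N # G) \<subseteq> set G' \<longrightarrow> sstn C \<longrightarrow> slf G' N C \<longrightarrow> sfi G' None C"
      by (auto intro: srf_sfi_slf.sDownL)
    then have "sfi (SDown N # G) None N"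
      using ih unfolding IdN_def by blast
    then have "srf (SDown N # G) (SDown N)" by (rule sDownR)
    then have "sfi (SDown N # G) None C" using h[rule_format, of "SDown N # G"] by auto
    then show "sfi G (Some (SDown N)) C" by (auto intro: srf_sfi_slf.sL)
  qed
qed

lemma sidc2: "IdP SBot"
proof -
  show "IdP SBot" unfolding IdP_def by (auto intro: sBotL)
qed

lemma sidc3: "IdP STop"
proof -
  show "IdP STop" unfolding IdP_def by (auto intro: sTL sTR)
qed

lemma sidc4: "IdN (SNQ (q::'a))"
proof -
  show "IdN (SNQ q)" unfolding IdN_def
  proof (intro allI impI)
    fix G :: "'a sp list" assume h: "\<forall>G' C. set G \<subseteq> set G' \<longrightarrow> sstn C \<longrightarrow> slf G' (SNQ q) C \<longrightarrow> sfi G' None C"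
    show "sfi G None (SNQ q)" using h[rule_format, of G "SNQ q"] by (auto intro: sQL)
  qed
qed

lemma sidc5: "IdP (A::'a sp) \<Longrightarrow> IdN (SUp A)"
proof -
  assume ih: "IdP A"
  show "IdN (SUp A)" unfolding IdN_def
  proof (intro allI impI)
    fix G :: "'a sp list" assume h: "\<forall>G' C. set G \<subseteq> set G' \<longrightarrow> sstn C \<longrightarrow> slf G' (SUp A) C \<longrightarrow> sfi G' None C"
    have "sfi G (Some A) (SUp A)" using ih unfolding IdP_def by (auto intro: sUpR)
    then have "slf G (SUp A) (SUp A)" by (rule sUpL)
    then show "sfi G None (SUp A)" using h[rule_format, of G "SUp A"] by auto
  qed
qed

lemma sidc6: "IdP (A::'a sp) \<Longrightarrow> IdN (B::'a sn) \<Longrightarrow> IdN (SImp A B)"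
proof -
  assume ihA: "IdP A" and ihB: "IdN B"
  show "IdN (SImp A B)" unfolding IdN_def
  proof (intro allI impI)
    fix G :: "'a sp list" assume h: "\<forall>G' C. set G \<subseteq> set G' \<longrightarrow> sstn C \<longrightarrow> slf G' (SImp A B) C \<longrightarrow> sfi G' None C"
    have "\<forall>G'. set G \<subseteq> set G' \<longrightarrow> srf G' A \<longrightarrow> sfi G' None B"
    proof (intro allI impI)
      fix G' :: "'a sp list" assume g: "set G \<subseteq> set G'" "srf G' A"
      have "\<forall>G'' C. set G' \<subseteq> set G'' \<longrightarrow> sstn C \<longrightarrow> slf G'' B C \<longrightarrow> sfi G'' None C"
      proof (intro allI impI)
        fix G'' :: "'a sp list" and C :: "'a sn" assume "set G' \<subseteq> set G''" "sstn C" "slf G'' B C"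
        moreover have "srf G'' A" using g(2) \<open>set G' \<subseteq> set G''\<close> by (rule sweak(1))
        ultimately have "slf G'' (SImp A B) C" by (auto intro: sImpL)
        then show "sfi G'' None C" using h[rule_format, of G'' C] g(1) \<open>set G' \<subseteq> set G''\<close> \<open>sstn C\<close> by auto
      qed
      then show "sfi G' None B" using ihB unfolding IdN_def by blast
    qed
    then have "sfi G (Some A) B" using ihA unfolding IdP_def by blast
    then show "sfi G None (SImp A B)" by (rule sImpR)
  qed
qed

lemma sid_aux: "IdP (A::'a sp) \<and> IdN (N::'a sn)"
  by (rule conjI[OF sp.induct[of IdP IdN A] sn.induct[of IdP IdN N]]) (blast intro: sidc0 sidc1 sidc2 sidc3 sidc4 sidc5 sidc6)+

lemma sid_down: "SDown N \<in> set G \<Longrightarrow> sfi G None N"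
proof -
  assume a: "SDown N \<in> set G"
  have "\<forall>G' C. set G \<subseteq> set G' \<longrightarrow> sstn C \<longrightarrow> slf G' N C \<longrightarrow> sfi G' None C"
    using a by (auto intro: sDownL)
  then show ?thesis using sid_aux[of SBot N] unfolding IdN_def by blast
qed

fun tp :: "('a ppos \<Rightarrow> bool) \<Rightarrow> ('a ppos \<Rightarrow> bool) \<Rightarrow> 'a ppos \<Rightarrow> 'a sp"
and tn :: "('a ppos \<Rightarrow> bool) \<Rightarrow> ('a ppos \<Rightarrow> bool) \<Rightarrow> 'a pneg \<Rightarrow> 'a sn" where
  "tp dk bk (PQ q) = SQ q"
| "tp dk bk (Down N) = SDown (tn dk bk N)"
| "tp dk bk PBot = SBot"
| "tp dk bk (PDia A) = (if dk A then STop else SBot)"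
| "tp dk bk (PBox A) = (if bk A then STop else SBot)"
| "tn dk bk (NQ q) = SNQ q"
| "tn dk bk (Up A) = SUp (tp dk bk A)"
| "tn dk bk (PImp A B) = SImp (tp dk bk A) (tn dk bk B)"

definition tcx :: "('a ppos \<Rightarrow> bool) \<Rightarrow> ('a ppos \<Rightarrow> bool) \<Rightarrow> 'w \<Rightarrow> ('a, 'w) uctx \<Rightarrow> 'a sp list" where
  "tcx dk bk x \<Delta> = map (\<lambda>(B, z). tp dk bk (polc_elem B)) (filter (\<lambda>(B, z). z = x) \<Delta>)"

definition good :: "'a pneg \<Rightarrow> bool" where
  "good c \<longleftrightarrow> (\<exists>B. c = poln B) \<or> (\<exists>B. c = Up (polp B))"

lemma tcx_mem: "s \<in> set (tcx dk bk x \<Delta>) \<longleftrightarrow> (\<exists>B. (B, x) \<in> set \<Delta> \<and> s = tp dk bk (polc_elem B))"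
  unfolding tcx_def by force

lemma tcx_cons_same: "tcx dk bk x ((A, x) # \<Delta>) = tp dk bk (polc_elem A) # tcx dk bk x \<Delta>"
  unfolding tcx_def by simp

lemma tcx_cons_other: "w \<noteq> x \<Longrightarrow> tcx dk bk x ((A, w) # \<Delta>) = tcx dk bk x \<Delta>"
  unfolding tcx_def by simp

lemma polc_cons: "polc ((A, w) # \<Delta>) = (polc_elem A, w) # polc \<Delta>"
  unfolding polc_def by simp

lemma polc_mem: "(a, w) \<in> set (polc \<Delta>) \<longleftrightarrow> (\<exists>B. (B, w) \<in> set \<Delta> \<and> a = polc_elem B)"
  unfolding polc_def by force

lemma polc_elem_PQ: "polc_elem B = PQ q \<longleftrightarrow> B = PAtom q"
  by (cases B) auto

lemma polc_elem_Down: "polc_elem B = Down N \<Longrightarrow> N = poln B"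
  by (cases B) auto

lemma polc_elem_Down2: "B \<noteq> PAtom q \<Longrightarrow> (\<forall>q. B \<noteq> PAtom q) \<Longrightarrow> polc_elem B = Down (poln B)"
  by (cases B) auto

lemma stable_polp: "stable_pos (polp A) \<Longrightarrow> polc_elem A = polp A"
  by (cases A) auto

lemma tp_polc_SQ: "tp dk bk (polc_elem B) = SQ q \<Longrightarrow> B = PAtom q"
  by (cases B) auto

lemma tp_polc_SDown: "tp dk bk (polc_elem B) = SDown n \<Longrightarrow> polc_elem B = Down (poln B) \<and> n = tn dk bk (poln B)"
  by (cases B) auto

lemma tp_polp_SQ: "tp dk bk (polp B) = SQ q \<Longrightarrow> B = PAtom q"
  by (cases B) (auto split: if_splits)

lemma tp_polp_SDown: "tp dk bk (polp B) = SDown n \<Longrightarrow> polp B = Down (poln B) \<and> n = tn dk bk (poln B)"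
  by (cases B) (auto split: if_splits)

lemma tp_polp_STop: "tp dk bk (polp B) = STop \<Longrightarrow>
   (\<exists>A. B = UDia A \<and> dk (polp A)) \<or> (\<exists>A. B = UBox A \<and> bk (polp A))"
  by (cases B) (auto split: if_splits)

lemma tp_polp_SBot: "tp dk bk (polp B) = SBot \<Longrightarrow>
   B = UBot \<or> (\<exists>A. B = UDia A \<and> \<not> dk (polp A)) \<or> (\<exists>A. B = UBox A \<and> \<not> bk (polp A))"
  by (cases B) (auto split: if_splits)

lemma tp_stable: "sstp (tp dk bk a) \<Longrightarrow> stable_pos a"
  by (cases a) (auto split: if_splits)

lemma tp_stable2: "stable_pos a \<Longrightarrow> sstp (tp dk bk a)"
  by (cases a) auto

lemma tn_stable: "sstn (tn dk bk c) \<Longrightarrow> stable_neg c"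
  by (cases c) auto

lemma tn_stable2: "stable_neg c \<Longrightarrow> sstn (tn dk bk c)"
  by (cases c) auto

lemma tn_poln_SImp: "tn dk bk (poln B) = SImp a b \<Longrightarrow>
   \<exists>B1 B2. B = UImp B1 B2 \<and> a = tp dk bk (polp B1) \<and> b = tn dk bk (poln B2)"
  by (cases B) auto

lemma tn_poln_SUp: "tn dk bk (poln B) = SUp a \<Longrightarrow> poln B = Up (polp B) \<and> a = tp dk bk (polp B)"
  by (cases B) auto

lemma tn_poln_SNQ: "tn dk bk (poln B) = SNQ q \<Longrightarrow> B = NAtom q"
  by (cases B) auto

lemma poln_Up: "poln B = Up a \<Longrightarrow> a = polp B"
  by (cases B) auto

lemma poln_PImp: "poln B = PImp a b \<Longrightarrow> \<exists>B1 B2. B = UImp B1 B2 \<and> a = polp B1 \<and> b = poln B2"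
  by (cases B) auto

lemma polp_Down: "polp B = Down N \<Longrightarrow> N = poln B"
  by (cases B) auto

lemma polp_PDia: "polp B = PDia a \<Longrightarrow> \<exists>A. B = UDia A \<and> a = polp A"
  by (cases B) auto

lemma polp_PBox: "polp B = PBox a \<Longrightarrow> \<exists>A. B = UBox A \<and> a = polp A"
  by (cases B) auto

lemma polp_PQ: "polp B = PQ q \<Longrightarrow> B = PAtom q"
  by (cases B) auto

lemma polp_PBot: "polp B = PBot \<Longrightarrow> B = UBot"
  by (cases B) auto

lemma good_SImp: "good c \<Longrightarrow> tn dk bk c = SImp a b \<Longrightarrow>
   \<exists>B1 B2. c = PImp (polp B1) (poln B2) \<and> a = tp dk bk (polp B1) \<and> b = tn dk bk (poln B2)"
  unfolding good_def by (auto dest!: tn_poln_SImp) blast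

lemma good_SUp: "good c \<Longrightarrow> tn dk bk c = SUp s \<Longrightarrow> \<exists>B. c = Up (polp B) \<and> s = tp dk bk (polp B)"
  unfolding good_def by (auto dest!: tn_poln_SUp)

lemma good_SNQ: "good c \<Longrightarrow> tn dk bk c = SNQ q \<Longrightarrow> c = NQ q"
  unfolding good_def by (auto dest!: tn_poln_SNQ)

lemma good_Up: "good (Up a) \<Longrightarrow> \<exists>B. a = polp B"
  unfolding good_def by (auto dest: poln_Up[OF sym])

lemma good_PImp: "good (PImp a b) \<Longrightarrow> \<exists>B1 B2. a = polp B1 \<and> b = poln B2"
  unfolding good_def by (auto dest: poln_PImp[OF sym])

lemma good_poln: "good (poln B)" and good_Up_polp: "good (Up (polp B))"
  unfolding good_def by auto

lemma polp_poln_inj: "(\<forall>A'. polp A = polp A' \<longrightarrow> A = A') \<and> (\<forall>A'. poln A = poln A' \<longrightarrow> A = A')"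
  by (induction A) (intro conjI allI impI; case_tac A'; auto)+

lemma polp_inj: "polp A = polp A' \<Longrightarrow> A = A'"
  using polp_poln_inj by blast

lemma sw_hyp: "tp dk bk (polc_elem B) \<in> set G \<Longrightarrow> sfi G None (tn dk bk (poln B))"
proof (cases B)
  case (PAtom q)
  assume "tp dk bk (polc_elem B) \<in> set G"
  then show ?thesis using PAtom by (auto intro: sUpR sQR)
qed (auto intro: sid_down)

lemma sw_impI: "sfi (tp dk bk (polc_elem A) # G) None c \<Longrightarrow> sfi G None (SImp (tp dk bk (polp A)) c)"
proof -
  assume a: "sfi (tp dk bk (polc_elem A) # G) None c"
  have "sfi G (Some (tp dk bk (polp A))) c"
  proof (cases A)
    case (UDia A')
    show ?thesis
    proof (cases "dk (polp A')")
      case True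
      have "sfi G None (SUp STop)" by (intro sUpR sTR)
      moreover have "sfi (SDown (SUp STop) # G) None c" using a UDia True by simp
      ultimately have "sfi G None c" by (rule s_cut3)
      then show ?thesis using UDia True by (simp add: sTL)
    qed (use UDia in \<open>simp add: sBotL\<close>)
  next
    case (UBox A')
    show ?thesis
    proof (cases "bk (polp A')")
      case True
      have "sfi G None (SUp STop)" by (intro sUpR sTR)
      moreover have "sfi (SDown (SUp STop) # G) None c" using a UBox True by simp
      ultimately have "sfi G None c" by (rule s_cut3)
      then show ?thesis using UBox True by (simp add: sTL)
    qed (use UBox in \<open>simp add: sBotL\<close>)
  qed (use a in \<open>auto intro: sL sBotL\<close>)
  then show ?thesis by (rule sImpR)
qed

lemma sw_impE: "sfi G None (SImp (tp dk bk (polp A)) c) \<Longrightarrow> sfi G None (tn dk bk (poln A)) \<Longrightarrow> sfi G None c"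
proof -
  assume a: "sfi G None (SImp (tp dk bk (polp A)) c)" and b: "sfi G None (tn dk bk (poln A))"
  have r: "sfi G (Some (tp dk bk (polp A))) c" using a by (auto elim: sfiNoneE)
  show ?thesis
  proof (cases A)
    case (NAtom q)
    then show ?thesis using r b sfi_Some_stable s_cut3 by fastforce
  next
    case (UImp A1 A2)
    then show ?thesis using r b sfi_Some_stable s_cut3 by fastforce
  qed (use r b s_cut4 in auto)
qed

lemma sw_shift: "sfi G None (tn dk bk (poln B)) \<Longrightarrow> sfi G None (SUp (tp dk bk (polp B)))"
  by (cases B) (auto intro: sUpR sDownR)

context
  fixes R :: "'w \<Rightarrow> 'w \<Rightarrow> bool"
  assumes wfR: "wfP (\<lambda>x y. R y x)"
begin

lemma later_wf: "wf (later_rel R)"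
proof -
  have "wfP ((\<lambda>x y. R y x)\<^sup>+\<^sup>+)" using wfp_tranclp[OF wfR] .
  moreover have "(\<lambda>x y. R y x)\<^sup>+\<^sup>+ = (\<lambda>x y. R\<^sup>+\<^sup>+ y x)"
    by (auto simp: fun_eq_iff intro: tranclp_converseI tranclp_converseD[unfolded conversep_iff]
             dest: tranclp_converseD)
  ultimately have "wfP (\<lambda>x y. (x, y) \<in> later_rel R)" by (simp add: later_rel_def)
  then show ?thesis by (simp add: wfp_wf_eq)
qed

lemma no_cycle: "R\<^sup>+\<^sup>+ x y \<Longrightarrow> R\<^sup>*\<^sup>* y x \<Longrightarrow> False"
proof -
  assume a: "R\<^sup>+\<^sup>+ x y" "R\<^sup>*\<^sup>* y x"
  then have "R\<^sup>+\<^sup>+ x x" using tranclp_rtranclp_tranclp by metis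
  then have "(x, x) \<in> later_rel R" by (simp add: later_rel_def)
  with later_wf show False by (meson wf_not_refl)
qed


definition Ond :: "'w \<Rightarrow> ('a, 'w) uctx \<Rightarrow> 'a uprop \<Rightarrow> 'w \<Rightarrow> bool" where
  "Ond w = (\<lambda>\<Gamma>' A' v. R\<^sup>+\<^sup>+ w v \<and> ND R \<Gamma>' A' v)"

lemma nd_unfold: "ND R \<Gamma> A w = nd_step R (Ond w) \<Gamma> A w"
proof -
  have eq: "nd_world R w = (\<lambda>\<Gamma> A. nd_step R (\<lambda>\<Gamma>' A' v. R\<^sup>+\<^sup>+ w v \<and> nd_world R v \<Gamma>' A') \<Gamma> A w)"
    unfolding nd_world_def
    by (subst wfrec[OF later_wf]) (simp add: cut_def later_rel_def cong: conj_cong)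
  show ?thesis unfolding ND_def Ond_def by (simp only: eq)
qed

lemma nd_transfer:
  assumes "nd_step R P \<Gamma> A x" "R\<^sup>*\<^sup>* u x" "Q x \<Gamma> \<Gamma>'"
   and h1: "\<And>x x' \<Gamma> \<Gamma>'. Q x \<Gamma> \<Gamma>' \<Longrightarrow> R\<^sup>*\<^sup>* x x' \<Longrightarrow> Q x' \<Gamma> \<Gamma>'"
   and h2: "\<And>x \<Gamma> \<Gamma>' B. Q x \<Gamma> \<Gamma>' \<Longrightarrow> R\<^sup>*\<^sup>* u x \<Longrightarrow> Q x ((B,x)#\<Gamma>) ((B,x)#\<Gamma>')"
   and h3: "\<And>x \<Gamma> \<Gamma>' B. Q x \<Gamma> \<Gamma>' \<Longrightarrow> R\<^sup>*\<^sup>* u x \<Longrightarrow> (B,x) \<in> set \<Gamma> \<Longrightarrow> nd_step R P' \<Gamma>' B x"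
   and h4: "\<And>x \<Gamma> \<Gamma>' B y. Q x \<Gamma> \<Gamma>' \<Longrightarrow> R\<^sup>*\<^sup>* u x \<Longrightarrow> R x y \<Longrightarrow> P' \<Gamma>' B y \<Longrightarrow> P \<Gamma> B y"
  shows "nd_step R P' \<Gamma>' A x"
  using assms(1-3)
proof (induction arbitrary: \<Gamma>' rule: nd_step.induct)
  case (nd_hyp A w \<Gamma>)
  then show ?case using h3 by blast
next
  case (nd_botE w' w \<Gamma> C)
  have "R\<^sup>*\<^sup>* u w" using nd_botE by auto
  moreover have "Q w \<Gamma> \<Gamma>'" using h1 nd_botE by blast
  ultimately show ?case using nd_botE by (blast intro: nd_step.nd_botE)
next
  case (nd_impI A w \<Gamma> B)
  then show ?case using h2 by (blast intro: nd_step.nd_impI)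
next
  case (nd_impE \<Gamma> A B w)
  then show ?case by (blast intro: nd_step.nd_impE)
next
  case (nd_diaI w w' \<Gamma> A)
  then show ?case using h1 by (meson nd_step.nd_diaI r_into_rtranclp rtranclp.rtrancl_into_rtrancl)
next
  case (nd_boxI w \<Gamma> A)
  have "\<forall>w'. R w w' \<longrightarrow> nd_step R P' \<Gamma>' A w'"
  proof (intro allI impI)
    fix w' assume "R w w'"
    then have "R\<^sup>*\<^sup>* u w'" "Q w' \<Gamma> \<Gamma>'" using nd_boxI h1[OF _ r_into_rtranclp] by auto
    then show "nd_step R P' \<Gamma>' A w'" using nd_boxI \<open>R w w'\<close> by blast
  qed
  then show ?case by (rule nd_step.nd_boxI)
next
  case (nd_diaE w'' w \<Gamma> A C)
  have u: "R\<^sup>*\<^sup>* u w" using nd_diaE by auto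
  have q: "Q w \<Gamma> \<Gamma>'" using h1 nd_diaE by blast
  show ?case
  proof (rule nd_step.nd_diaE[OF nd_diaE(1)])
    show "nd_step R P' \<Gamma>' (UDia A) w" using nd_diaE u q by blast
    show "\<forall>w'. R w w' \<longrightarrow> P' \<Gamma>' A w' \<longrightarrow> nd_step R P' \<Gamma>' C w''"
      using nd_diaE h4[OF q u] by blast
  qed
next
  case (nd_boxE w'' w \<Gamma> A C)
  have u: "R\<^sup>*\<^sup>* u w" using nd_boxE by auto
  have q: "Q w \<Gamma> \<Gamma>'" using h1 nd_boxE by blast
  show ?case
  proof (rule nd_step.nd_boxE[OF nd_boxE(1)])
    show "nd_step R P' \<Gamma>' (UBox A) w" using nd_boxE u q by blast
    show "(\<forall>w'. R w w' \<longrightarrow> P' \<Gamma>' A w') \<longrightarrow> nd_step R P' \<Gamma>' C w''"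
      using nd_boxE h4[OF q u] by blast
  qed
qed


lemma nd_agree1:
  assumes "R\<^sup>*\<^sup>* w0 v" "nd_step R (Ond w0) \<Gamma> A v" shows "ND R \<Gamma> A v"
  unfolding nd_unfold
  by (rule nd_transfer[OF assms(2), where u=v and Q="\<lambda>x a b. a = b"])
     (auto simp: Ond_def intro: nd_hyp rtranclp_tranclp_tranclp[OF assms(1)]
           rtranclp_into_tranclp1)

lemma nd_agree2:
  assumes "R\<^sup>*\<^sup>* w0 v" "ND R \<Gamma> A v" shows "nd_step R (Ond w0) \<Gamma> A v"
  using assms(2) unfolding nd_unfold
  by (rule nd_transfer[where u=v and Q="\<lambda>x a b. a = b"])
     (auto simp: Ond_def intro: nd_hyp rtranclp_into_tranclp1)

definition agree :: "'w \<Rightarrow> ('b \<times> 'w) list \<Rightarrow> ('b \<times> 'w) list \<Rightarrow> bool" where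
  "agree y \<Gamma> \<Gamma>' = (\<forall>B z. R\<^sup>*\<^sup>* y z \<longrightarrow> ((B, z) \<in> set \<Gamma> \<longleftrightarrow> (B, z) \<in> set \<Gamma>'))"

lemma agree_sym: "agree y \<Gamma> \<Gamma>' \<Longrightarrow> agree y \<Gamma>' \<Gamma>"
  by (auto simp: agree_def)

lemma agree_mono: "agree y \<Gamma> \<Gamma>' \<Longrightarrow> R\<^sup>*\<^sup>* y z \<Longrightarrow> agree z \<Gamma> \<Gamma>'"
  unfolding agree_def by (meson rtranclp_trans)

lemma wf_ind:
  assumes "\<And>u. (\<And>y. R\<^sup>+\<^sup>+ u y \<Longrightarrow> P y) \<Longrightarrow> P u" shows "P u"
  by (rule wf_induct[OF later_wf]) (use assms in \<open>auto simp: later_rel_def\<close>)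

lemma nd_irrel_aux: "\<forall>\<Gamma> \<Gamma>' (A::'a uprop). agree u \<Gamma> \<Gamma>' \<longrightarrow> ND R \<Gamma> A u \<longrightarrow> ND R \<Gamma>' A u"
proof (induction u rule: wf_ind)
  case (1 u)
  have h1: "\<And>x x' a b. agree x a b \<Longrightarrow> R\<^sup>*\<^sup>* x x' \<Longrightarrow> agree x' a b"
    using agree_mono by blast
  have h2: "\<And>x a b B. agree x a b \<Longrightarrow> R\<^sup>*\<^sup>* u x \<Longrightarrow> agree x ((B, x) # a) ((B, x) # b)"
    by (auto simp: agree_def)
  have h3: "\<And>x a b B. agree x a b \<Longrightarrow> R\<^sup>*\<^sup>* u x \<Longrightarrow> (B, x) \<in> set a \<Longrightarrow> nd_step R (Ond u) b B x"
    by (auto simp: agree_def intro: nd_hyp)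
  show ?case
  proof (intro allI impI)
    fix \<Gamma> \<Gamma>' and A :: "'a uprop" assume ag: "agree u \<Gamma> \<Gamma>'" and d: "ND R \<Gamma> A u"
    show "ND R \<Gamma>' A u" using d unfolding nd_unfold
      apply (rule nd_transfer[where u=u and Q=agree])
      apply simp
      apply (rule ag)
      apply (erule h1, assumption)
      apply (erule h2, assumption)
      apply (erule h3, assumption+)
      subgoal for x a b B y
      proof -
        assume that: "agree x a b" "R\<^sup>*\<^sup>* u x" "R x y" "Ond u b B y"
        have uy: "R\<^sup>+\<^sup>+ u y" using that by (meson rtranclp_into_tranclp1)
        have "agree y b a" using that agree_sym agree_mono by blast
        moreover have "ND R b B y" using that(4) unfolding Ond_def by blast
        ultimately have "ND R a B y" by (rule 1[OF uy, rule_format])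
        then show "Ond u a B y" using uy unfolding Ond_def by blast
      qed
      done
  qed
qed

lemma nd_irrel: "agree u \<Gamma> \<Gamma>' \<Longrightarrow> ND R \<Gamma> A u \<Longrightarrow> ND R \<Gamma>' A u"
  using nd_irrel_aux by blast

lemma nd_irrel_iff: "agree u \<Gamma> \<Gamma>' \<Longrightarrow> ND R \<Gamma> A u \<longleftrightarrow> ND R \<Gamma>' A u"
  using nd_irrel agree_sym by blast

lemma nd_weak:
  fixes A :: "'a uprop"
  assumes "set \<Gamma> \<subseteq> set \<Gamma>'" "\<forall>B z. R\<^sup>+\<^sup>+ u z \<longrightarrow> (B, z) \<in> set \<Gamma>' \<longrightarrow> (B, z) \<in> set \<Gamma>"
    "ND R \<Gamma> A u"
  shows "ND R \<Gamma>' A u"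
proof -
  define Q where "Q = (\<lambda>(x::'w) (a::('a uprop \<times> 'w) list) b. set a \<subseteq> set b \<and> (\<forall>B z. R\<^sup>+\<^sup>+ u z \<longrightarrow> (B, z) \<in> set b \<longrightarrow> (B, z) \<in> set a))"
  have h4: "Ond u a B y" if "Q x a b" "R\<^sup>*\<^sup>* u x" "R x y" "Ond u b B y" for x a b B y
  proof -
    have uy: "R\<^sup>+\<^sup>+ u y" using that by (meson rtranclp_into_tranclp1)
    have "agree y b a" using that uy unfolding agree_def Q_def
      by (meson tranclp_rtranclp_tranclp subsetD)
    then show ?thesis using that uy nd_irrel unfolding Ond_def by blast
  qed
  show ?thesis
    using assms(3) unfolding nd_unfold
    by (rule nd_transfer[where u=u and Q=Q, OF _ _ _ _ _ _ h4])
       (use assms in \<open>auto simp: Q_def intro: nd_hyp\<close>)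
qed

lemma nd_weak1: "\<not> R\<^sup>+\<^sup>+ u z \<Longrightarrow> ND R \<Gamma> A u \<Longrightarrow> ND R ((B, z) # \<Gamma>) A u"
  by (rule nd_weak) auto


lemma agree_notreach: "\<not> R\<^sup>*\<^sup>* z w1 \<Longrightarrow> agree z \<Gamma> ((A, w1) # \<Gamma>)"
  unfolding agree_def by auto

lemma agree_set: "set \<Gamma> = set \<Gamma>' \<Longrightarrow> agree z \<Gamma> \<Gamma>'"
  unfolding agree_def by auto

lemma nd_ws_aux: "\<forall>\<Gamma> (A::'a uprop) w1 B. R\<^sup>*\<^sup>* y w1 \<longrightarrow> ND R \<Gamma> A w1 \<longrightarrow>
   ((ND R ((A, w1) # \<Gamma>) B y \<longrightarrow> ND R \<Gamma> B y) \<and> (ND R \<Gamma> B y \<longrightarrow> ND R ((A, w1) # \<Gamma>) B y))"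
proof (induction y rule: wf_ind)
  case (1 y)
  have GV: "ND R \<Gamma> B z \<longleftrightarrow> ND R ((A, w1) # \<Gamma>) B z"
    if "R\<^sup>+\<^sup>+ y z" "R\<^sup>*\<^sup>* z w1 \<longrightarrow> ND R \<Gamma> A w1" for \<Gamma> and A :: "'a uprop" and w1 B z
  proof (cases "R\<^sup>*\<^sup>* z w1")
    case True then show ?thesis using 1[OF that(1)] that(2) by blast
  next
    case False
    show ?thesis using nd_irrel_iff[OF agree_notreach[OF False]] .
  qed
  show ?case
  proof (intro allI impI conjI)
    fix \<Gamma> and A :: "'a uprop" and w1 B
    assume yw: "R\<^sup>*\<^sup>* y w1" and dA: "ND R \<Gamma> A w1" and d: "ND R ((A, w1) # \<Gamma>) B y"
    define Q where "Q = (\<lambda>x (a::('a uprop \<times> 'w) list) b. set a = insert (A, w1) (set b) \<and> (R\<^sup>*\<^sup>* x w1 \<longrightarrow> ND R b A w1))"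
    show "ND R \<Gamma> B y" using d unfolding nd_unfold
      apply (rule nd_transfer[where u=y and Q=Q])
          apply simp
      subgoal using yw dA by (simp add: Q_def)
      subgoal for x x' a b by (auto simp: Q_def intro: rtranclp_trans)
      subgoal for x a b B'
        by (auto simp: Q_def intro!: nd_weak1 dest: no_cycle)
      subgoal for x a b B'
      proof -
        assume q: "Q x a b" and ux: "R\<^sup>*\<^sup>* y x" and m: "(B', x) \<in> set a"
        show "nd_step R (Ond y) b B' x"
        proof (cases "(B', x) = (A, w1)")
          case True
          then have "ND R b A w1" using q by (simp add: Q_def)
          then show ?thesis using True ux nd_agree2 by blast
        next
          case False
          then show ?thesis using q m by (auto simp: Q_def intro: nd_hyp)
        qed
      qed
      subgoal for x a b B' z
      proof -
        assume q: "Q x a b" and ux: "R\<^sup>*\<^sup>* y x" and xz: "R x z" and o: "Ond y b B' z"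
        have yz: "R\<^sup>+\<^sup>+ y z" using ux xz by (meson rtranclp_into_tranclp1)
        have "R\<^sup>*\<^sup>* z w1 \<longrightarrow> ND R b A w1" using q converse_rtranclp_into_rtranclp[of R, OF xz] by (auto simp: Q_def)
        then have "ND R ((A, w1) # b) B' z" using GV[OF yz] o by (auto simp: Ond_def)
        moreover have "agree z ((A, w1) # b) a" using q by (intro agree_set) (auto simp: Q_def)
        ultimately show "Ond y a B' z" using yz nd_irrel by (auto simp: Ond_def)
      qed
      done
  next
    fix \<Gamma> and A :: "'a uprop" and w1 B
    assume yw: "R\<^sup>*\<^sup>* y w1" and dA: "ND R \<Gamma> A w1" and d: "ND R \<Gamma> B y"
    define Q where "Q = (\<lambda>x (a::('a uprop \<times> 'w) list) b. set b = insert (A, w1) (set a) \<and> (R\<^sup>*\<^sup>* x w1 \<longrightarrow> ND R a A w1))"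
    show "ND R ((A, w1) # \<Gamma>) B y" using d unfolding nd_unfold
      apply (rule nd_transfer[where u=y and Q=Q])
          apply simp
      subgoal using yw dA by (simp add: Q_def)
      subgoal for x x' a b by (auto simp: Q_def intro: rtranclp_trans)
      subgoal for x a b B'
        by (auto simp: Q_def intro!: nd_weak1 dest: no_cycle)
      subgoal for x a b B'
        by (auto simp: Q_def intro: nd_hyp)
      subgoal for x a b B' z
      proof -
        assume q: "Q x a b" and ux: "R\<^sup>*\<^sup>* y x" and xz: "R x z" and o: "Ond y b B' z"
        have yz: "R\<^sup>+\<^sup>+ y z" using ux xz by (meson rtranclp_into_tranclp1)
        have "R\<^sup>*\<^sup>* z w1 \<longrightarrow> ND R a A w1" using q converse_rtranclp_into_rtranclp[of R, OF xz] by (auto simp: Q_def)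
        moreover have "agree z b ((A, w1) # a)" using q by (intro agree_set) (auto simp: Q_def)
        then have "ND R ((A, w1) # a) B' z" using o nd_irrel by (auto simp: Ond_def)
        ultimately have "ND R a B' z" using GV[OF yz] by blast
        then show "Ond y a B' z" using yz by (auto simp: Ond_def)
      qed
      done
  qed
qed

lemma nd_ws: "ND R \<Gamma> A w1 \<Longrightarrow> ND R \<Gamma> B y \<longleftrightarrow> ND R ((A, w1) # \<Gamma>) B y"
proof (cases "R\<^sup>*\<^sup>* y w1")
  case True
  assume a: "ND R \<Gamma> A w1"
  show ?thesis using nd_ws_aux[of y, rule_format, OF True a] by blast
next
  case False
  show ?thesis using nd_irrel_iff[OF agree_notreach[OF False]] .
qed


lemma nd_hypI: "(A, w) \<in> set \<Gamma> \<Longrightarrow> ND R \<Gamma> A w"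
  by (simp add: nd_unfold nd_hyp)

lemma nd_impE': "ND R \<Gamma> (UImp A B) w \<Longrightarrow> ND R \<Gamma> A w \<Longrightarrow> ND R \<Gamma> B w"
  by (simp add: nd_unfold) (rule nd_impE)

lemma nd_impI': "ND R ((A, w) # \<Gamma>) B w \<Longrightarrow> ND R \<Gamma> (UImp A B) w"
  by (simp add: nd_unfold) (rule nd_impI)

lemma nd_botE': "R\<^sup>*\<^sup>* w' w \<Longrightarrow> ND R \<Gamma> UBot w \<Longrightarrow> ND R \<Gamma> C w'"
  unfolding nd_unfold[of \<Gamma> C w'] by (rule nd_botE) (auto intro: nd_agree2)

lemma nd_diaI': "R w w' \<Longrightarrow> ND R \<Gamma> A w' \<Longrightarrow> ND R \<Gamma> (UDia A) w"
  unfolding nd_unfold[of \<Gamma> "UDia A" w] by (rule nd_diaI) (auto intro: nd_agree2)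

lemma nd_boxI': "(\<And>w'. R w w' \<Longrightarrow> ND R \<Gamma> A w') \<Longrightarrow> ND R \<Gamma> (UBox A) w"
  unfolding nd_unfold[of \<Gamma> "UBox A" w] by (rule nd_boxI) (auto intro: nd_agree2)

lemma nd_diaE': "R\<^sup>*\<^sup>* w'' w \<Longrightarrow> ND R \<Gamma> (UDia A) w \<Longrightarrow> (\<And>w'. R w w' \<Longrightarrow> ND R \<Gamma> A w' \<Longrightarrow> ND R \<Gamma> C w'')
   \<Longrightarrow> ND R \<Gamma> C w''"
proof -
  assume a: "R\<^sup>*\<^sup>* w'' w" "ND R \<Gamma> (UDia A) w" "\<And>w'. R w w' \<Longrightarrow> ND R \<Gamma> A w' \<Longrightarrow> ND R \<Gamma> C w''"
  have f1: "nd_step R (Ond w'') \<Gamma> (UDia A) w" using a nd_agree2 by blast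
  have "\<forall>w'. R w w' \<longrightarrow> Ond w'' \<Gamma> A w' \<longrightarrow> ND R \<Gamma> C w''"
    using a(3) by (auto simp: Ond_def)
  then have "\<forall>w'. R w w' \<longrightarrow> Ond w'' \<Gamma> A w' \<longrightarrow> nd_step R (Ond w'') \<Gamma> C w''"
    by (simp add: nd_unfold)
  then show ?thesis unfolding nd_unfold[of \<Gamma> C w''] by (rule nd_diaE[OF a(1) f1])
qed

lemma nd_boxE': "R\<^sup>*\<^sup>* w'' w \<Longrightarrow> ND R \<Gamma> (UBox A) w \<Longrightarrow> ((\<And>w'. R w w' \<Longrightarrow> ND R \<Gamma> A w') \<Longrightarrow> ND R \<Gamma> C w'')
   \<Longrightarrow> ND R \<Gamma> C w''"
proof -
  assume a: "R\<^sup>*\<^sup>* w'' w" "ND R \<Gamma> (UBox A) w" "(\<And>w'. R w w' \<Longrightarrow> ND R \<Gamma> A w') \<Longrightarrow> ND R \<Gamma> C w''"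
  have f1: "nd_step R (Ond w'') \<Gamma> (UBox A) w" using a nd_agree2 by blast
  have "(\<forall>w'. R w w' \<longrightarrow> Ond w'' \<Gamma> A w') \<longrightarrow> ND R \<Gamma> C w''"
    using a(3) by (auto simp: Ond_def)
  then have "(\<forall>w'. R w w' \<longrightarrow> Ond w'' \<Gamma> A w') \<longrightarrow> nd_step R (Ond w'') \<Gamma> C w''"
    by (simp add: nd_unfold)
  then show ?thesis unfolding nd_unfold[of \<Gamma> C w''] by (rule nd_boxE[OF a(1) f1])
qed

lemma nd_dia_bot: "ND R \<Gamma> (UDia A) w \<Longrightarrow> \<not> (\<exists>w'. R w w' \<and> ND R \<Gamma> A w') \<Longrightarrow> ND R \<Gamma> UBot w"
  by (rule nd_diaE'[of w w]) auto

lemma nd_box_bot: "ND R \<Gamma> (UBox A) w \<Longrightarrow> \<not> (\<forall>w'. R w w' \<longrightarrow> ND R \<Gamma> A w') \<Longrightarrow> ND R \<Gamma> UBot w"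
  by (rule nd_boxE'[of w w]) auto

definition Ofoc :: "'w \<Rightarrow> ('a, 'w) pctx \<Rightarrow> 'a pneg \<Rightarrow> 'w \<Rightarrow> bool" where
  "Ofoc w = (\<lambda>\<Gamma>' C' v. R\<^sup>+\<^sup>+ w v \<and> FInv R \<Gamma>' C' v)"

lemma foc_unfold: "FInv R \<Gamma> C w = finv R (Ofoc w) \<Gamma> None C w"
proof -
  have eq: "foc_world R w = (\<lambda>\<Gamma> C. finv R (\<lambda>\<Gamma>' C' v. R\<^sup>+\<^sup>+ w v \<and> foc_world R v \<Gamma>' C') \<Gamma> None C w)"
    unfolding foc_world_def
    by (subst wfrec[OF later_wf]) (simp add: cut_def later_rel_def cong: conj_cong)
  show ?thesis unfolding FInv_def Ofoc_def by (simp only: eq)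
qed

lemma foc_transfer:
  assumes h: "\<And>\<Gamma> B y. R\<^sup>+\<^sup>+ u y \<Longrightarrow> P' \<Gamma> B y \<Longrightarrow> P \<Gamma> B y"
  shows "rfoc R P \<Gamma> A x \<Longrightarrow> R\<^sup>*\<^sup>* u x \<Longrightarrow> rfoc R P' \<Gamma> A x"
    and "finv R P \<Gamma> \<Omega> C x \<Longrightarrow> R\<^sup>*\<^sup>* u x \<Longrightarrow> (\<forall>A w'. \<Omega> = Some (A, w') \<longrightarrow> R\<^sup>*\<^sup>* u w')
         \<Longrightarrow> finv R P' \<Gamma> \<Omega> C x"
    and "lfoc R P \<Gamma> F C x \<Longrightarrow> R\<^sup>*\<^sup>* u x \<Longrightarrow> R\<^sup>*\<^sup>* u (snd F) \<Longrightarrow> lfoc R P' \<Gamma> F C x"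
proof (induction rule: rfoc_finv_lfoc.inducts)
  case (DiaR w w' \<Gamma> A)
  have "R\<^sup>*\<^sup>* u w'" using DiaR by (meson rtranclp.rtrancl_into_rtrancl)
  then have f: "finv R P' \<Gamma> None (Up A) w'" using DiaR by simp
  show ?case using DiaR(1) f by (rule rfoc_finv_lfoc.DiaR)
next
  case (BoxR w \<Gamma> A)
  have "\<forall>w'. R w w' \<longrightarrow> finv R P' \<Gamma> None (Up A) w'"
  proof (intro allI impI)
    fix w' assume "R w w'"
    then have "R\<^sup>*\<^sup>* u w'" using BoxR by (meson rtranclp.rtrancl_into_rtrancl)
    then show "finv R P' \<Gamma> None (Up A) w'" using BoxR \<open>R w w'\<close> by simp
  qed
  then show ?case by (rule rfoc_finv_lfoc.BoxR)
next
  case (DownL C w w' A \<Gamma>)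
  have "R\<^sup>*\<^sup>* u w'" using DownL by (meson rtranclp_trans)
  then have l: "lfoc R P' \<Gamma> (A, w') C w" using DownL by simp
  show ?case by (rule rfoc_finv_lfoc.DownL) (use DownL l in auto)
next
  case (DiaL w' \<Gamma> A C w'')
  have "\<forall>w. R w' w \<longrightarrow> P' \<Gamma> (Up A) w \<longrightarrow> finv R P' \<Gamma> None C w''"
  proof (intro allI impI)
    fix w assume "R w' w" "P' \<Gamma> (Up A) w"
    moreover have "R\<^sup>*\<^sup>* u w'" using DiaL(3) by simp
    then have "R\<^sup>+\<^sup>+ u w" using \<open>R w' w\<close> by (simp add: rtranclp_into_tranclp1)
    ultimately show "finv R P' \<Gamma> None C w''" using DiaL h by blast
  qed
  then show ?case by (rule rfoc_finv_lfoc.DiaL)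
next
  case (BoxL w' \<Gamma> A C w'')
  have "(\<forall>w. R w' w \<longrightarrow> P' \<Gamma> (Up A) w) \<longrightarrow> finv R P' \<Gamma> None C w''"
  proof
    assume a: "\<forall>w. R w' w \<longrightarrow> P' \<Gamma> (Up A) w"
    have "R\<^sup>*\<^sup>* u w'" using BoxL(3) by simp
    then have "\<forall>w. R w' w \<longrightarrow> P \<Gamma> (Up A) w"
      using a h by (meson rtranclp_into_tranclp1)
    then show "finv R P' \<Gamma> None C w''" using BoxL by blast
  qed
  then show ?case by (rule rfoc_finv_lfoc.BoxL)
qed (auto intro: rfoc_finv_lfoc.intros)

lemma foc_agree1: "R\<^sup>*\<^sup>* w0 v \<Longrightarrow> finv R (Ofoc w0) \<Gamma> None C v \<Longrightarrow> FInv R \<Gamma> C v"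
  unfolding foc_unfold
  by (rule foc_transfer(2)[where u=v]) (auto simp: Ofoc_def intro: rtranclp_tranclp_tranclp)

lemma foc_agree2: "R\<^sup>*\<^sup>* w0 v \<Longrightarrow> FInv R \<Gamma> C v \<Longrightarrow> finv R (Ofoc w0) \<Gamma> None C v"
  unfolding foc_unfold
  by (rule foc_transfer(2)[where u=v]) (auto simp: Ofoc_def)


definition lnk :: "'w \<Rightarrow> ('a, 'w) uctx \<Rightarrow> ('a ppos \<Rightarrow> bool) \<Rightarrow> ('a ppos \<Rightarrow> bool) \<Rightarrow> bool" where
  "lnk x \<Delta> dk bk \<longleftrightarrow> (\<forall>A. dk (polp A) \<longleftrightarrow> (\<exists>y. R x y \<and> ND R \<Delta> A y)) \<and>
                      (\<forall>A. bk (polp A) \<longleftrightarrow> (\<forall>y. R x y \<longrightarrow> ND R \<Delta> A y))"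

definition IncL :: "'w \<Rightarrow> ('a, 'w) uctx \<Rightarrow> bool" where
  "IncL x \<Delta> \<longleftrightarrow> (\<exists>u. R\<^sup>+\<^sup>+ x u \<and> ND R \<Delta> UBot u)"

definition later_eq :: "'w \<Rightarrow> ('a, 'w) uctx \<Rightarrow> ('a, 'w) uctx \<Rightarrow> bool" where
  "later_eq x \<Delta> \<Delta>' \<longleftrightarrow> (\<forall>A y. R\<^sup>+\<^sup>+ x y \<longrightarrow> (ND R \<Delta> A y \<longleftrightarrow> ND R \<Delta>' A y))"

lemma lnk_cong: "lnk x \<Delta> dk bk \<Longrightarrow> later_eq x \<Delta> \<Delta>' \<Longrightarrow> lnk x \<Delta>' dk bk"
  unfolding lnk_def later_eq_def by (meson tranclp.r_into_trancl)

lemma IncL_cong: "later_eq x \<Delta> \<Delta>' \<Longrightarrow> IncL x \<Delta> \<longleftrightarrow> IncL x \<Delta>'"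
  unfolding IncL_def later_eq_def by blast

lemma later_eq_hyp_x: "later_eq x \<Delta> ((B, x) # \<Delta>)"
  unfolding later_eq_def
proof (intro allI impI)
  fix A :: "'a uprop" and y assume xy: "R\<^sup>+\<^sup>+ x y"
  have "\<not> R\<^sup>*\<^sup>* y x" using xy no_cycle by blast
  then show "ND R \<Delta> A y \<longleftrightarrow> ND R ((B, x) # \<Delta>) A y" using nd_irrel_iff[OF agree_notreach] by blast
qed

lemma later_eq_deriv: "ND R \<Delta> B w1 \<Longrightarrow> later_eq x \<Delta> ((B, w1) # \<Delta>)"
  unfolding later_eq_def using nd_ws[of \<Delta> B w1] by blast

lemma IncL_ND: "IncL x \<Delta> \<Longrightarrow> ND R \<Delta> C x"
  unfolding IncL_def by (auto intro: nd_botE' tranclp_into_rtranclp)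

section \<open>From natural deduction to the single-world calculus\<close>

lemma R3:
  assumes "nd_step R (Ond x) \<Delta> B w"
  shows "w = x \<Longrightarrow> lnk x \<Delta> dk bk \<Longrightarrow> IncL x \<Delta> \<or> sfi (tcx dk bk x \<Delta>) None (tn dk bk (poln B))"
  using assms
proof (induction rule: nd_step.induct)
  case (nd_hyp A w \<Gamma>)
  then show ?case by (auto intro!: sw_hyp simp: tcx_mem)
next
  case (nd_botE w' w \<Gamma> C)
  show ?case
  proof (cases "w = x")
    case True
    then have "IncL x \<Gamma> \<or> sfi (tcx dk bk x \<Gamma>) None (SUp SBot)" using nd_botE by simp
    then show ?thesis using s_explode by blast
  next
    case False
    then have "R\<^sup>+\<^sup>+ x w" using nd_botE by (metis rtranclp.cases tranclp.r_into_trancl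
          tranclp_rtranclp_tranclp converse_rtranclpE)
    moreover have "ND R \<Gamma> UBot w" using nd_botE nd_agree1 by blast
    ultimately show ?thesis unfolding IncL_def by blast
  qed
next
  case (nd_impI A w \<Gamma> B)
  have le: "later_eq x \<Gamma> ((A, x) # \<Gamma>)" by (rule later_eq_hyp_x)
  have "IncL x ((A, w) # \<Gamma>) \<or> sfi (tcx dk bk x ((A, w) # \<Gamma>)) None (tn dk bk (poln B))"
    using nd_impI lnk_cong[OF _ le] by blast
  then show ?case using nd_impI IncL_cong[OF le] by (auto simp: tcx_cons_same intro: sw_impI)
next
  case (nd_impE \<Gamma> A B w)
  then show ?case using sw_impE by fastforce
next
  case (nd_diaI w w' \<Gamma> A)
  have "ND R \<Gamma> A w'" using nd_diaI nd_agree1 by blast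
  then have "dk (polp A)" using nd_diaI unfolding lnk_def by blast
  then show ?case by (auto intro: sUpR sTR)
next
  case (nd_boxI w \<Gamma> A)
  have "\<forall>w'. R x w' \<longrightarrow> ND R \<Gamma> A w'" using nd_boxI nd_agree1 by blast
  then have "bk (polp A)" using nd_boxI unfolding lnk_def by blast
  then show ?case by (auto intro: sUpR sTR)
next
  case (nd_diaE w'' w \<Gamma> A C)
  show ?case
  proof (cases "w = x")
    case True
    show ?thesis
    proof (cases "dk (polp A)")
      case True
      then obtain y where y: "R x y" "ND R \<Gamma> A y" using nd_diaE unfolding lnk_def by blast
      then have "Ond x \<Gamma> A y" by (auto simp: Ond_def)
      then show ?thesis using nd_diaE y \<open>w = x\<close> by blast
    next
      case False
      then have "IncL x \<Gamma> \<or> sfi (tcx dk bk x \<Gamma>) None (SUp SBot)" using nd_diaE \<open>w = x\<close> by simp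
      then show ?thesis using s_explode by blast
    qed
  next
    case False
    then have xw: "R\<^sup>+\<^sup>+ x w" using nd_diaE by (metis converse_rtranclpE tranclp.r_into_trancl
          tranclp_rtranclp_tranclp)
    have d: "ND R \<Gamma> (UDia A) w" using nd_diaE nd_agree1 by blast
    show ?thesis
    proof (cases "\<exists>w'. R w w' \<and> ND R \<Gamma> A w'")
      case True
      then obtain w' where "R w w'" "ND R \<Gamma> A w'" by blast
      moreover then have "Ond x \<Gamma> A w'" using xw by (auto simp: Ond_def intro: tranclp.trancl_into_trancl)
      ultimately show ?thesis using nd_diaE by blast
    next
      case False
      then have "ND R \<Gamma> UBot w" using d nd_dia_bot by blast
      then show ?thesis using xw unfolding IncL_def by blast
    qed
  qed
next
  case (nd_boxE w'' w \<Gamma> A C)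
  show ?case
  proof (cases "w = x")
    case True
    show ?thesis
    proof (cases "bk (polp A)")
      case True
      then have "\<forall>y. R x y \<longrightarrow> ND R \<Gamma> A y" using nd_boxE unfolding lnk_def by blast
      then have "\<forall>y. R x y \<longrightarrow> Ond x \<Gamma> A y" by (auto simp: Ond_def)
      then show ?thesis using nd_boxE \<open>w = x\<close> by blast
    next
      case False
      then have "IncL x \<Gamma> \<or> sfi (tcx dk bk x \<Gamma>) None (SUp SBot)" using nd_boxE \<open>w = x\<close> by simp
      then show ?thesis using s_explode by blast
    qed
  next
    case False
    then have xw: "R\<^sup>+\<^sup>+ x w" using nd_boxE by (metis converse_rtranclpE tranclp.r_into_trancl
          tranclp_rtranclp_tranclp)
    have d: "ND R \<Gamma> (UBox A) w" using nd_boxE nd_agree1 by blast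
    show ?thesis
    proof (cases "\<forall>w'. R w w' \<longrightarrow> ND R \<Gamma> A w'")
      case True
      then have "\<forall>w'. R w w' \<longrightarrow> Ond x \<Gamma> A w'" using xw
        by (auto simp: Ond_def intro: tranclp.trancl_into_trancl)
      then show ?thesis using nd_boxE by blast
    next
      case False
      then have "ND R \<Gamma> UBot w" using d nd_box_bot by blast
      then show ?thesis using xw unfolding IncL_def by blast
    qed
  qed
qed


section \<open>From the single-world calculus to natural deduction\<close>

lemma R4:
  shows "srf G a \<Longrightarrow> \<forall>(\<Delta>::('a, 'w) uctx) B. G = tcx dk bk x \<Delta> \<longrightarrow> lnk x \<Delta> dk bk \<longrightarrow>
            a = tp dk bk (polp B) \<longrightarrow> ND R \<Delta> B x"
    and "sfi G Om c \<Longrightarrow> \<forall>(\<Delta>::('a, 'w) uctx) B. G = tcx dk bk x \<Delta> \<longrightarrow> lnk x \<Delta> dk bk \<longrightarrow>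
            (c = tn dk bk (poln B) \<or> c = SUp (tp dk bk (polp B))) \<longrightarrow>
            (case Om of None \<Rightarrow> ND R \<Delta> B x
             | Some a \<Rightarrow> (\<forall>A. a = tp dk bk (polp A) \<longrightarrow> ND R ((A, x) # \<Delta>) B x))"
    and "slf G n c \<Longrightarrow> \<forall>(\<Delta>::('a, 'w) uctx) A B. G = tcx dk bk x \<Delta> \<longrightarrow> lnk x \<Delta> dk bk \<longrightarrow>
            n = tn dk bk (poln A) \<longrightarrow> (c = tn dk bk (poln B) \<or> c = SUp (tp dk bk (polp B))) \<longrightarrow>
            ND R \<Delta> A x \<longrightarrow> ND R \<Delta> B x"
proof (induction rule: srf_sfi_slf.inducts)
  case (sQR q G)
  show ?case
  proof (intro allI impI)
    fix \<Delta> :: "('a, 'w) uctx" and B :: "'a uprop"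
    assume a: "G = tcx dk bk x \<Delta>" "lnk x \<Delta> dk bk" "SQ q = tp dk bk (polp B)"
    have B: "B = PAtom q" using tp_polp_SQ[OF a(3)[symmetric]] .
    obtain B' where "(B', x) \<in> set \<Delta>" "SQ q = tp dk bk (polc_elem B')"
      using sQR a(1) tcx_mem by metis
    then have "(PAtom q, x) \<in> set \<Delta>" using tp_polc_SQ by metis
    then show "ND R \<Delta> B x" using B nd_hypI by simp
  qed
next
  case (sDownR G N)
  show ?case
  proof (intro allI impI)
    fix \<Delta> :: "('a, 'w) uctx" and B :: "'a uprop"
    assume a: "G = tcx dk bk x \<Delta>" "lnk x \<Delta> dk bk" "SDown N = tp dk bk (polp B)"
    have "N = tn dk bk (poln B)" using tp_polp_SDown[OF a(3)[symmetric]] by simp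
    then show "ND R \<Delta> B x" using sDownR a by auto
  qed
next
  case (sTR G)
  show ?case
  proof (intro allI impI)
    fix \<Delta> :: "('a, 'w) uctx" and B :: "'a uprop"
    assume a: "G = tcx dk bk x \<Delta>" "lnk x \<Delta> dk bk" "STop = tp dk bk (polp B)"
    from tp_polp_STop[OF a(3)[symmetric]]
    show "ND R \<Delta> B x"
    proof (elim disjE exE conjE)
      fix A assume "B = UDia A" "dk (polp A)"
      then obtain y where "R x y" "ND R \<Delta> A y" using a(2) unfolding lnk_def by blast
      then show ?thesis using \<open>B = UDia A\<close> nd_diaI' by blast
    next
      fix A assume "B = UBox A" "bk (polp A)"
      then have "\<forall>y. R x y \<longrightarrow> ND R \<Delta> A y" using a(2) unfolding lnk_def by blast
      then show ?thesis using \<open>B = UBox A\<close> nd_boxI' by blast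
    qed
  qed
next
  case (sImpR G A B)
  show ?case
  proof (intro allI impI)
    fix \<Delta> :: "('a, 'w) uctx" and B0 :: "'a uprop"
    assume a: "G = tcx dk bk x \<Delta>" "lnk x \<Delta> dk bk"
      "SImp A B = tn dk bk (poln B0) \<or> SImp A B = SUp (tp dk bk (polp B0))"
    then have "SImp A B = tn dk bk (poln B0)" by simp
    from tn_poln_SImp[OF this[symmetric]] obtain B1 B2 where
      b: "B0 = UImp B1 B2" "A = tp dk bk (polp B1)" "B = tn dk bk (poln B2)" by blast
    have "ND R ((B1, x) # \<Delta>) B2 x" using sImpR a b by auto
    then show "case None of None \<Rightarrow> ND R \<Delta> B0 x | Some a \<Rightarrow> \<forall>A. a = tp dk bk (polp A) \<longrightarrow> ND R ((A, x) # \<Delta>) B0 x"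
      using b nd_impI' by simp
  qed
next
  case (sL A G C)
  show ?case
  proof (intro allI impI)
    fix \<Delta> :: "('a, 'w) uctx" and B :: "'a uprop"
    assume a: "G = tcx dk bk x \<Delta>" "lnk x \<Delta> dk bk"
      "C = tn dk bk (poln B) \<or> C = SUp (tp dk bk (polp B))"
    have "ND R ((A', x) # \<Delta>) B x" if "A = tp dk bk (polp A')" for A'
    proof -
      have "stable_pos (polp A')" using sL(1) that tp_stable by blast
      then have "polc_elem A' = polp A'" by (rule stable_polp)
      then have "A # G = tcx dk bk x ((A', x) # \<Delta>)" using a(1) that by (simp add: tcx_cons_same)
      moreover have "lnk x ((A', x) # \<Delta>) dk bk" using lnk_cong[OF a(2) later_eq_hyp_x] .
      ultimately show ?thesis using sL(3) a(3) by auto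
    qed
    then show "case Some A of None \<Rightarrow> ND R \<Delta> B x | Some a \<Rightarrow> \<forall>A. a = tp dk bk (polp A) \<longrightarrow> ND R ((A, x) # \<Delta>) B x"
      by simp
  qed
next
  case (sDownL C N G)
  show ?case
  proof (intro allI impI)
    fix \<Delta> :: "('a, 'w) uctx" and B :: "'a uprop"
    assume a: "G = tcx dk bk x \<Delta>" "lnk x \<Delta> dk bk"
      "C = tn dk bk (poln B) \<or> C = SUp (tp dk bk (polp B))"
    obtain B' where b: "(B', x) \<in> set \<Delta>" "SDown N = tp dk bk (polc_elem B')"
      using sDownL(2) a(1) tcx_mem by metis
    then have "N = tn dk bk (poln B')" using tp_polc_SDown by metis
    moreover have "ND R \<Delta> B' x" using b nd_hypI by blast
    ultimately have "ND R \<Delta> B x" using sDownL(4) a by blast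
    then show "case None of None \<Rightarrow> ND R \<Delta> B x | Some a \<Rightarrow> \<forall>A. a = tp dk bk (polp A) \<longrightarrow> ND R ((A, x) # \<Delta>) B x"
      by simp
  qed
next
  case (sBotL G C)
  show ?case
  proof (intro allI impI)
    fix \<Delta> :: "('a, 'w) uctx" and B :: "'a uprop"
    assume a: "G = tcx dk bk x \<Delta>" "lnk x \<Delta> dk bk"
      "C = tn dk bk (poln B) \<or> C = SUp (tp dk bk (polp B))"
    have "ND R ((A, x) # \<Delta>) B x" if "SBot = tp dk bk (polp A)" for A
    proof -
      from tp_polp_SBot[OF that[symmetric]] show ?thesis
      proof (elim disjE exE conjE)
        assume "A = UBot"
        then have "ND R ((A, x) # \<Delta>) UBot x" by (simp add: nd_hypI)
        then show ?thesis by (rule nd_botE'[rotated]) simp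
      next
        fix A' assume A: "A = UDia A'" "\<not> dk (polp A')"
        have h: "ND R ((A, x) # \<Delta>) (UDia A') x" using A by (simp add: nd_hypI)
        show ?thesis
        proof (rule nd_diaE'[OF _ h])
          fix w' assume xw: "R x w'" and d: "ND R ((A, x) # \<Delta>) A' w'"
          have "ND R \<Delta> A' w'" using d later_eq_hyp_x[of x \<Delta> A] xw unfolding later_eq_def by blast
          then have "dk (polp A')" using a(2) xw unfolding lnk_def by blast
          then show "ND R ((A, x) # \<Delta>) B x" using A by blast
        qed simp
      next
        fix A' assume A: "A = UBox A'" "\<not> bk (polp A')"
        have h: "ND R ((A, x) # \<Delta>) (UBox A') x" using A by (simp add: nd_hypI)
        show ?thesis
        proof (rule nd_boxE'[OF _ h])
          assume d: "\<And>w'. R x w' \<Longrightarrow> ND R ((A, x) # \<Delta>) A' w'"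
          have "\<forall>w'. R x w' \<longrightarrow> ND R \<Delta> A' w'"
            using d later_eq_hyp_x[of x \<Delta> A] unfolding later_eq_def by blast
          then have "bk (polp A')" using a(2) unfolding lnk_def by blast
          then show "ND R ((A, x) # \<Delta>) B x" using A by blast
        qed simp
      qed
    qed
    then show "case Some SBot of None \<Rightarrow> ND R \<Delta> B x | Some a \<Rightarrow> \<forall>A. a = tp dk bk (polp A) \<longrightarrow> ND R ((A, x) # \<Delta>) B x"
      by simp
  qed
next
  case (sTL G C)
  show ?case
  proof (intro allI impI)
    fix \<Delta> :: "('a, 'w) uctx" and B :: "'a uprop"
    assume a: "G = tcx dk bk x \<Delta>" "lnk x \<Delta> dk bk"
      "C = tn dk bk (poln B) \<or> C = SUp (tp dk bk (polp B))"
    have "ND R \<Delta> B x" using sTL a by auto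
    then have "ND R ((A, x) # \<Delta>) B x" for A
      by (rule nd_weak1[rotated]) (use no_cycle in blast)
    then show "case Some STop of None \<Rightarrow> ND R \<Delta> B x | Some a \<Rightarrow> \<forall>A. a = tp dk bk (polp A) \<longrightarrow> ND R ((A, x) # \<Delta>) B x"
      by simp
  qed
next
  case (sUpR G A)
  show ?case
  proof (intro allI impI)
    fix \<Delta> :: "('a, 'w) uctx" and B :: "'a uprop"
    assume a: "G = tcx dk bk x \<Delta>" "lnk x \<Delta> dk bk"
      "SUp A = tn dk bk (poln B) \<or> SUp A = SUp (tp dk bk (polp B))"
    then have "A = tp dk bk (polp B)" using tn_poln_SUp by (metis sn.inject(2))
    then have "ND R \<Delta> B x" using sUpR a by auto
    then show "case None of None \<Rightarrow> ND R \<Delta> B x | Some a \<Rightarrow> \<forall>A. a = tp dk bk (polp A) \<longrightarrow> ND R ((A, x) # \<Delta>) B x"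
      by simp
  qed
next
  case (sQL G q)
  show ?case
  proof (intro allI impI)
    fix \<Delta> :: "('a, 'w) uctx" and A B :: "'a uprop"
    assume a: "G = tcx dk bk x \<Delta>" "lnk x \<Delta> dk bk" "SNQ q = tn dk bk (poln A)"
      "SNQ q = tn dk bk (poln B) \<or> SNQ q = SUp (tp dk bk (polp B))" "ND R \<Delta> A x"
    have "A = NAtom q" using tn_poln_SNQ a(3) by metis
    moreover have "B = NAtom q" using tn_poln_SNQ a(4) by (metis sn.distinct(1))
    ultimately show "ND R \<Delta> B x" using a(5) by simp
  qed
next
  case (sUpL G A C)
  show ?case
  proof (intro allI impI)
    fix \<Delta> :: "('a, 'w) uctx" and A0 B :: "'a uprop"
    assume a: "G = tcx dk bk x \<Delta>" "lnk x \<Delta> dk bk" "SUp A = tn dk bk (poln A0)"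
      "C = tn dk bk (poln B) \<or> C = SUp (tp dk bk (polp B))" "ND R \<Delta> A0 x"
    have "A = tp dk bk (polp A0)" using tn_poln_SUp a(3) by metis
    then have "ND R ((A0, x) # \<Delta>) B x" using sUpL a by auto
    then show "ND R \<Delta> B x" using nd_ws[OF a(5)] by blast
  qed
next
  case (sImpL G A B C)
  show ?case
  proof (intro allI impI)
    fix \<Delta> :: "('a, 'w) uctx" and A0 B0 :: "'a uprop"
    assume a: "G = tcx dk bk x \<Delta>" "lnk x \<Delta> dk bk" "SImp A B = tn dk bk (poln A0)"
      "C = tn dk bk (poln B0) \<or> C = SUp (tp dk bk (polp B0))" "ND R \<Delta> A0 x"
    from tn_poln_SImp[OF a(3)[symmetric]] obtain A1 A2 where
      b: "A0 = UImp A1 A2" "A = tp dk bk (polp A1)" "B = tn dk bk (poln A2)" by blast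
    have "ND R \<Delta> A1 x" using sImpL a b by auto
    then have "ND R \<Delta> A2 x" using a(5) b nd_impE' by blast
    then show "ND R \<Delta> B0 x" using sImpL a b by auto
  qed
qed


section \<open>From the focused calculus to the single-world calculus\<close>

lemma rt_neq: "R\<^sup>*\<^sup>* x w \<Longrightarrow> w \<noteq> x \<Longrightarrow> R\<^sup>+\<^sup>+ x w"
  by (metis rtranclpD)

lemma R1:
  assumes IH: "\<And>y (\<Delta>::('a, 'w) uctx) B. R\<^sup>+\<^sup>+ x y \<Longrightarrow>
     (FInv R (polc \<Delta>) (poln B) y \<longleftrightarrow> ND R \<Delta> B y) \<and> (FInv R (polc \<Delta>) (Up (polp B)) y \<longleftrightarrow> ND R \<Delta> B y)"
  shows "rfoc R (Ofoc x) \<Gamma> a z \<Longrightarrow> z = x \<Longrightarrow> \<forall>(\<Delta>::('a, 'w) uctx) B. \<Gamma> = polc \<Delta> \<longrightarrow> lnk x \<Delta> dk bk \<longrightarrow>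
            a = polp B \<longrightarrow> IncL x \<Delta> \<or> srf (tcx dk bk x \<Delta>) (tp dk bk a)"
    and "finv R (Ofoc x) \<Gamma> Om c z \<Longrightarrow> z = x \<Longrightarrow> \<forall>(\<Delta>::('a, 'w) uctx). \<Gamma> = polc \<Delta> \<longrightarrow> lnk x \<Delta> dk bk \<longrightarrow> good c \<longrightarrow>
            (case Om of None \<Rightarrow> IncL x \<Delta> \<or> sfi (tcx dk bk x \<Delta>) None (tn dk bk c)
             | Some (a, w1) \<Rightarrow> R\<^sup>*\<^sup>* x w1 \<longrightarrow> (\<forall>A. a = polp A \<longrightarrow>
                (if w1 = x then IncL x \<Delta> \<or> sfi (tcx dk bk x \<Delta>) (Some (tp dk bk a)) (tn dk bk c)
                 else (ND R \<Delta> A w1 \<longrightarrow> IncL x \<Delta> \<or> sfi (tcx dk bk x \<Delta>) None (tn dk bk c)))))"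
    and "lfoc R (Ofoc x) \<Gamma> F c z \<Longrightarrow> z = x \<Longrightarrow> \<forall>(\<Delta>::('a, 'w) uctx) A. \<Gamma> = polc \<Delta> \<longrightarrow> lnk x \<Delta> dk bk \<longrightarrow> good c \<longrightarrow>
            fst F = poln A \<longrightarrow> R\<^sup>*\<^sup>* x (snd F) \<longrightarrow>
            (if snd F = x then IncL x \<Delta> \<or> slf (tcx dk bk x \<Delta>) (tn dk bk (fst F)) (tn dk bk c)
             else (ND R \<Delta> A (snd F) \<longrightarrow> IncL x \<Delta> \<or> sfi (tcx dk bk x \<Delta>) None (tn dk bk c)))"
proof (induction rule: rfoc_finv_lfoc.inducts)
  case (QR q w \<Gamma>)
  show ?case
  proof (intro allI impI)
    fix \<Delta> :: "('a, 'w) uctx" and B :: "'a uprop"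
    assume a: "\<Gamma> = polc \<Delta>" "lnk x \<Delta> dk bk" "PQ q = polp B"
    obtain B' where "(B', x) \<in> set \<Delta>" "PQ q = polc_elem B'"
      using QR a(1) polc_mem by metis
    then have "(PAtom q, x) \<in> set \<Delta>" using polc_elem_PQ by metis
    then have "SQ q \<in> set (tcx dk bk x \<Delta>)" unfolding tcx_mem by force
    then show "IncL x \<Delta> \<or> srf (tcx dk bk x \<Delta>) (tp dk bk (PQ q))" by (simp add: sQR)
  qed
next
  case (DownR \<Gamma> A w)
  show ?case
  proof (intro allI impI)
    fix \<Delta> :: "('a, 'w) uctx" and B :: "'a uprop"
    assume a: "\<Gamma> = polc \<Delta>" "lnk x \<Delta> dk bk" "Down A = polp B"
    have "A = poln B" by (rule polp_Down[OF a(3)[symmetric]])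
    then have "good A" by (simp add: good_poln)
    then have "IncL x \<Delta> \<or> sfi (tcx dk bk x \<Delta>) None (tn dk bk A)" using DownR a by auto
    then show "IncL x \<Delta> \<or> srf (tcx dk bk x \<Delta>) (tp dk bk (Down A))" by (auto intro: sDownR)
  qed
next
  case (DiaR w w' \<Gamma> A)
  show ?case
  proof (intro allI impI)
    fix \<Delta> :: "('a, 'w) uctx" and B :: "'a uprop"
    assume a: "\<Gamma> = polc \<Delta>" "lnk x \<Delta> dk bk" "PDia A = polp B"
    obtain A1 where b: "B = UDia A1" "A = polp A1" using polp_PDia a(3)[symmetric] by blast
    have xw: "R x w'" using DiaR by simp
    have "FInv R \<Gamma> (Up A) w'" using foc_agree1[of x w'] DiaR xw by auto
    then have "ND R \<Delta> A1 w'" using IH[of w' \<Delta> A1] xw a b by auto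
    then have "dk (polp A1)" using a(2) xw unfolding lnk_def by blast
    then show "IncL x \<Delta> \<or> srf (tcx dk bk x \<Delta>) (tp dk bk (PDia A))" using b by (simp add: sTR)
  qed
next
  case (BoxR w \<Gamma> A)
  show ?case
  proof (intro allI impI)
    fix \<Delta> :: "('a, 'w) uctx" and B :: "'a uprop"
    assume a: "\<Gamma> = polc \<Delta>" "lnk x \<Delta> dk bk" "PBox A = polp B"
    obtain A1 where b: "B = UBox A1" "A = polp A1" using polp_PBox a(3)[symmetric] by blast
    have "ND R \<Delta> A1 w'" if xw: "R x w'" for w'
    proof -
      have "FInv R \<Gamma> (Up A) w'" using foc_agree1[of x w'] BoxR xw by auto
      then show "ND R \<Delta> A1 w'" using IH[of w' \<Delta> A1] xw a b by auto
    qed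
    then have "bk (polp A1)" using a(2) unfolding lnk_def by blast
    then show "IncL x \<Delta> \<or> srf (tcx dk bk x \<Delta>) (tp dk bk (PBox A))" using b by (simp add: sTR)
  qed
next
  case (ImpR \<Gamma> A w B)
  show ?case
  proof (simp only: option.case, intro allI impI)
    fix \<Delta> :: "('a, 'w) uctx"
    assume a: "\<Gamma> = polc \<Delta>" "lnk x \<Delta> dk bk" "good (PImp A B)"
    obtain B1 B2 where b: "A = polp B1" "B = poln B2" using good_PImp[OF a(3)] by blast
    have "IncL x \<Delta> \<or> sfi (tcx dk bk x \<Delta>) (Some (tp dk bk A)) (tn dk bk B)"
      using ImpR(2)[OF ImpR(3)] a b ImpR(3) by (auto simp: good_poln)
    then show "IncL x \<Delta> \<or> sfi (tcx dk bk x \<Delta>) None (tn dk bk (PImp A B))" by (auto intro: sImpR)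
  qed
next
  case (L A w' \<Gamma> C w)
  show ?case
  proof (intro allI impI)
    fix \<Delta> :: "('a, 'w) uctx"
    assume a: "\<Gamma> = polc \<Delta>" "lnk x \<Delta> dk bk" "good C"
    have "R\<^sup>*\<^sup>* x w' \<longrightarrow> (\<forall>A0. A = polp A0 \<longrightarrow>
                (if w' = x then IncL x \<Delta> \<or> sfi (tcx dk bk x \<Delta>) (Some (tp dk bk A)) (tn dk bk C)
                 else (ND R \<Delta> A0 w' \<longrightarrow> IncL x \<Delta> \<or> sfi (tcx dk bk x \<Delta>) None (tn dk bk C))))"
    proof (intro impI allI)
      fix A0 assume xw: "R\<^sup>*\<^sup>* x w'" and A0: "A = polp A0"
      have pe: "polc_elem A0 = A" using stable_polp L(1) A0 by simp
      then have pc: "(A, w') # \<Gamma> = polc ((A0, w') # \<Delta>)" using a(1) by (simp add: polc_cons)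
      show "if w' = x then IncL x \<Delta> \<or> sfi (tcx dk bk x \<Delta>) (Some (tp dk bk A)) (tn dk bk C)
                 else (ND R \<Delta> A0 w' \<longrightarrow> IncL x \<Delta> \<or> sfi (tcx dk bk x \<Delta>) None (tn dk bk C))"
      proof (cases "w' = x")
        case True
        have le: "later_eq x \<Delta> ((A0, w') # \<Delta>)" using True later_eq_hyp_x by simp
        have "IncL x ((A0, w') # \<Delta>) \<or> sfi (tcx dk bk x ((A0, w') # \<Delta>)) None (tn dk bk C)"
          using L(3)[OF L(4)] pc lnk_cong[OF a(2) le] a(3) by auto
        then have "IncL x \<Delta> \<or> sfi (tp dk bk A # tcx dk bk x \<Delta>) None (tn dk bk C)"
          using IncL_cong[OF le] True pe by (simp add: tcx_cons_same)
        then show ?thesis using True tp_stable2[OF L(1)] by (auto intro: sL)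
      next
        case False
        show ?thesis
        proof (simp only: False if_False, intro impI)
          assume d: "ND R \<Delta> A0 w'"
          have le: "later_eq x \<Delta> ((A0, w') # \<Delta>)" using later_eq_deriv[OF d] .
          have "IncL x ((A0, w') # \<Delta>) \<or> sfi (tcx dk bk x ((A0, w') # \<Delta>)) None (tn dk bk C)"
            using L(3)[OF L(4)] pc lnk_cong[OF a(2) le] a(3) by auto
          then show "IncL x \<Delta> \<or> sfi (tcx dk bk x \<Delta>) None (tn dk bk C)"
            using IncL_cong[OF le] False by (simp add: tcx_cons_other)
        qed
      qed
    qed
    then show "case Some (A, w') of None \<Rightarrow> IncL x \<Delta> \<or> sfi (tcx dk bk x \<Delta>) None (tn dk bk C)
             | Some (a, w1) \<Rightarrow> R\<^sup>*\<^sup>* x w1 \<longrightarrow> (\<forall>A. a = polp A \<longrightarrow>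
                (if w1 = x then IncL x \<Delta> \<or> sfi (tcx dk bk x \<Delta>) (Some (tp dk bk a)) (tn dk bk C)
                 else (ND R \<Delta> A w1 \<longrightarrow> IncL x \<Delta> \<or> sfi (tcx dk bk x \<Delta>) None (tn dk bk C))))"
      by simp
  qed
next
  case (DownL C w w' A \<Gamma>)
  show ?case
  proof (simp only: option.case, intro allI impI)
    fix \<Delta> :: "('a, 'w) uctx"
    assume a: "\<Gamma> = polc \<Delta>" "lnk x \<Delta> dk bk" "good C"
    have m: "(Down A, w') \<in> set \<Gamma>" using DownL.hyps by blast
    obtain B' where b: "(B', w') \<in> set \<Delta>" "Down A = polc_elem B'"
      using m a(1) polc_mem by metis
    have An: "A = poln B'" by (rule polc_elem_Down[OF b(2)[symmetric]])
    have xw: "R\<^sup>*\<^sup>* x w'" using DownL by simp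
    have IHl: "\<forall>(\<Delta>::('a,'w) uctx) A0. \<Gamma> = polc \<Delta> \<longrightarrow> lnk x \<Delta> dk bk \<longrightarrow> good C \<longrightarrow> fst (A, w') = poln A0 \<longrightarrow>
       R\<^sup>*\<^sup>* x (snd (A, w')) \<longrightarrow> (if snd (A, w') = x then IncL x \<Delta> \<or> slf (tcx dk bk x \<Delta>) (tn dk bk (fst (A, w'))) (tn dk bk C)
       else (ND R \<Delta> A0 (snd (A, w')) \<longrightarrow> IncL x \<Delta> \<or> sfi (tcx dk bk x \<Delta>) None (tn dk bk C)))"
      using DownL by blast
    have ih: "if w' = x then IncL x \<Delta> \<or> slf (tcx dk bk x \<Delta>) (tn dk bk A) (tn dk bk C)
             else (ND R \<Delta> B' w' \<longrightarrow> IncL x \<Delta> \<or> sfi (tcx dk bk x \<Delta>) None (tn dk bk C))"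
      using IHl[rule_format, of \<Delta> B'] a An xw by auto
    show "IncL x \<Delta> \<or> sfi (tcx dk bk x \<Delta>) None (tn dk bk C)"
    proof (cases "w' = x")
      case True
      have mem: "SDown (tn dk bk A) \<in> set (tcx dk bk x \<Delta>)"
        using b True unfolding tcx_mem by (metis tp.simps(2))
      have "stable_neg C" using DownL.hyps by blast
      then have "sstn (tn dk bk C)" by (rule tn_stable2)
      then show ?thesis using ih True mem by (auto intro: sDownL)
    next
      case False
      have "ND R \<Delta> B' w'" using b nd_hypI by blast
      then show ?thesis using ih False by auto
    qed
  qed
next
  case (BotL \<Gamma> w' C w)
  show ?case
  proof (simp only: option.case prod.case, intro allI impI)
    fix \<Delta> :: "('a, 'w) uctx" and A0 :: "'a uprop"
    assume a: "\<Gamma> = polc \<Delta>" "lnk x \<Delta> dk bk" "good C" "R\<^sup>*\<^sup>* x w'" "PBot = polp A0"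
    have A0: "A0 = UBot" using polp_PBot a(5)[symmetric] by blast
    show "if w' = x then IncL x \<Delta> \<or> sfi (tcx dk bk x \<Delta>) (Some (tp dk bk PBot)) (tn dk bk C)
          else (ND R \<Delta> A0 w' \<longrightarrow> IncL x \<Delta> \<or> sfi (tcx dk bk x \<Delta>) None (tn dk bk C))"
      using A0 rt_neq[OF a(4)] by (auto simp: sBotL IncL_def)
  qed
next
  case (DiaL w' \<Gamma> A C w'')
  show ?case
  proof (simp only: option.case prod.case, intro allI impI)
    fix \<Delta> :: "('a, 'w) uctx" and A0 :: "'a uprop"
    assume a: "\<Gamma> = polc \<Delta>" "lnk x \<Delta> dk bk" "good C" "R\<^sup>*\<^sup>* x w'" "PDia A = polp A0"
    obtain A1 where b: "A0 = UDia A1" "A = polp A1" using polp_PDia a(5)[symmetric] by blast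
    have prem: "IncL x \<Delta> \<or> sfi (tcx dk bk x \<Delta>) None (tn dk bk C)" if "R w' y" "ND R \<Delta> A1 y" for y
    proof -
      have xy: "R\<^sup>+\<^sup>+ x y" using a(4) that(1) by (simp add: rtranclp_into_tranclp1)
      have "FInv R \<Gamma> (Up A) y" using IH[OF xy, of \<Delta> A1] that(2) a(1) b by auto
      then have "Ofoc x \<Gamma> (Up A) y" using xy by (simp add: Ofoc_def)
      then show ?thesis using DiaL(1) that(1) DiaL(2) a by auto
    qed
    show "if w' = x then IncL x \<Delta> \<or> sfi (tcx dk bk x \<Delta>) (Some (tp dk bk (PDia A))) (tn dk bk C)
          else (ND R \<Delta> A0 w' \<longrightarrow> IncL x \<Delta> \<or> sfi (tcx dk bk x \<Delta>) None (tn dk bk C))"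
    proof (cases "w' = x")
      case True
      show ?thesis
      proof (cases "dk (polp A1)")
        case True
        then obtain y where "R x y" "ND R \<Delta> A1 y" using a(2) unfolding lnk_def by blast
        then show ?thesis using prem \<open>w' = x\<close> True b by (auto intro: sTL)
      next
        case False
        then show ?thesis using \<open>w' = x\<close> b by (auto intro: sBotL)
      qed
    next
      case False
      show ?thesis
      proof (simp only: False if_False, intro impI)
        assume d: "ND R \<Delta> A0 w'"
        show "IncL x \<Delta> \<or> sfi (tcx dk bk x \<Delta>) None (tn dk bk C)"
        proof (cases "\<exists>y. R w' y \<and> ND R \<Delta> A1 y")
          case True
          then show ?thesis using prem by blast
        next
          case False
          then have "ND R \<Delta> UBot w'" using d b nd_dia_bot by blast
          then show ?thesis using rt_neq[OF a(4)] \<open>w' \<noteq> x\<close> unfolding IncL_def by blast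
        qed
      qed
    qed
  qed
next
  case (BoxL w' \<Gamma> A C w'')
  show ?case
  proof (simp only: option.case prod.case, intro allI impI)
    fix \<Delta> :: "('a, 'w) uctx" and A0 :: "'a uprop"
    assume a: "\<Gamma> = polc \<Delta>" "lnk x \<Delta> dk bk" "good C" "R\<^sup>*\<^sup>* x w'" "PBox A = polp A0"
    obtain A1 where b: "A0 = UBox A1" "A = polp A1" using polp_PBox a(5)[symmetric] by blast
    have prem: "IncL x \<Delta> \<or> sfi (tcx dk bk x \<Delta>) None (tn dk bk C)" if "\<forall>y. R w' y \<longrightarrow> ND R \<Delta> A1 y"
    proof -
      have "\<forall>y. R w' y \<longrightarrow> Ofoc x \<Gamma> (Up A) y"
      proof (intro allI impI)
        fix y assume "R w' y"
        then have xy: "R\<^sup>+\<^sup>+ x y" using a(4) by (simp add: rtranclp_into_tranclp1)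
        have "FInv R \<Gamma> (Up A) y" using IH[OF xy, of \<Delta> A1] that \<open>R w' y\<close> a(1) b by auto
        then show "Ofoc x \<Gamma> (Up A) y" using xy by (simp add: Ofoc_def)
      qed
      then show ?thesis using BoxL(1) BoxL(2) a by auto
    qed
    show "if w' = x then IncL x \<Delta> \<or> sfi (tcx dk bk x \<Delta>) (Some (tp dk bk (PBox A))) (tn dk bk C)
          else (ND R \<Delta> A0 w' \<longrightarrow> IncL x \<Delta> \<or> sfi (tcx dk bk x \<Delta>) None (tn dk bk C))"
    proof (cases "w' = x")
      case True
      show ?thesis
      proof (cases "bk (polp A1)")
        case True
        then have "\<forall>y. R x y \<longrightarrow> ND R \<Delta> A1 y" using a(2) unfolding lnk_def by blast
        then show ?thesis using prem \<open>w' = x\<close> True b by (auto intro: sTL)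
      next
        case False
        then show ?thesis using \<open>w' = x\<close> b by (auto intro: sBotL)
      qed
    next
      case False
      show ?thesis
      proof (simp only: False if_False, intro impI)
        assume d: "ND R \<Delta> A0 w'"
        show "IncL x \<Delta> \<or> sfi (tcx dk bk x \<Delta>) None (tn dk bk C)"
        proof (cases "\<forall>y. R w' y \<longrightarrow> ND R \<Delta> A1 y")
          case True
          then show ?thesis using prem by blast
        next
          case False
          then have "ND R \<Delta> UBot w'" using d b nd_box_bot by blast
          then show ?thesis using rt_neq[OF a(4)] \<open>w' \<noteq> x\<close> unfolding IncL_def by blast
        qed
      qed
    qed
  qed
next
  case (UpR \<Gamma> A w)
  show ?case
  proof (simp only: option.case, intro allI impI)
    fix \<Delta> :: "('a, 'w) uctx"
    assume a: "\<Gamma> = polc \<Delta>" "lnk x \<Delta> dk bk" "good (Up A)"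
    obtain B where "A = polp B" using good_Up[OF a(3)] by blast
    then have "IncL x \<Delta> \<or> srf (tcx dk bk x \<Delta>) (tp dk bk A)" using UpR a by auto
    then show "IncL x \<Delta> \<or> sfi (tcx dk bk x \<Delta>) None (tn dk bk (Up A))"
      by (auto intro: sUpR)
  qed
next
  case (QL \<Gamma> q w)
  show ?case
  proof (intro allI impI)
    fix \<Delta> :: "('a, 'w) uctx" and A0 :: "'a uprop"
    show "if snd (NQ q, w) = x then IncL x \<Delta> \<or> slf (tcx dk bk x \<Delta>) (tn dk bk (fst (NQ q, w))) (tn dk bk (NQ q))
          else (ND R \<Delta> A0 (snd (NQ q, w)) \<longrightarrow> IncL x \<Delta> \<or> sfi (tcx dk bk x \<Delta>) None (tn dk bk (NQ q)))"
      using QL by (simp add: sQL)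
  qed
next
  case (UpL \<Gamma> A w' C w)
  show ?case
  proof (intro allI impI)
    fix \<Delta> :: "('a, 'w) uctx" and A0 :: "'a uprop"
    assume a: "\<Gamma> = polc \<Delta>" "lnk x \<Delta> dk bk" "good C" "fst (Up A, w') = poln A0" "R\<^sup>*\<^sup>* x (snd (Up A, w'))"
    have A0: "A = polp A0" using poln_Up[of A0 A] a(4) by simp
    have ih: "if w' = x then IncL x \<Delta> \<or> sfi (tcx dk bk x \<Delta>) (Some (tp dk bk A)) (tn dk bk C)
                 else (ND R \<Delta> A0 w' \<longrightarrow> IncL x \<Delta> \<or> sfi (tcx dk bk x \<Delta>) None (tn dk bk C))"
      using UpL(2)[OF UpL(3)] a A0 by auto
    then show "if snd (Up A, w') = x then IncL x \<Delta> \<or> slf (tcx dk bk x \<Delta>) (tn dk bk (fst (Up A, w'))) (tn dk bk C)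
             else (ND R \<Delta> A0 (snd (Up A, w')) \<longrightarrow> IncL x \<Delta> \<or> sfi (tcx dk bk x \<Delta>) None (tn dk bk C))"
      by (auto intro: sUpL)
  qed
next
  case (ImpL \<Gamma> A w' B C w)
  show ?case
  proof (intro allI impI)
    fix \<Delta> :: "('a, 'w) uctx" and A0 :: "'a uprop"
    assume a: "\<Gamma> = polc \<Delta>" "lnk x \<Delta> dk bk" "good C" "fst (PImp A B, w') = poln A0"
      "R\<^sup>*\<^sup>* x (snd (PImp A B, w'))"
    obtain A1 A2 where b: "A0 = UImp A1 A2" "A = polp A1" "B = poln A2"
      using poln_PImp[of A0 A B] a(4) by auto
    have IHl: "\<forall>(\<Delta>::('a,'w) uctx) A0. \<Gamma> = polc \<Delta> \<longrightarrow> lnk x \<Delta> dk bk \<longrightarrow> good C \<longrightarrow> fst (B, w') = poln A0 \<longrightarrow>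
       R\<^sup>*\<^sup>* x (snd (B, w')) \<longrightarrow> (if snd (B, w') = x then IncL x \<Delta> \<or> slf (tcx dk bk x \<Delta>) (tn dk bk (fst (B, w'))) (tn dk bk C)
       else (ND R \<Delta> A0 (snd (B, w')) \<longrightarrow> IncL x \<Delta> \<or> sfi (tcx dk bk x \<Delta>) None (tn dk bk C)))"
      using ImpL by blast
    have ih2: "if w' = x then IncL x \<Delta> \<or> slf (tcx dk bk x \<Delta>) (tn dk bk B) (tn dk bk C)
             else (ND R \<Delta> A2 w' \<longrightarrow> IncL x \<Delta> \<or> sfi (tcx dk bk x \<Delta>) None (tn dk bk C))"
      using IHl[rule_format, of \<Delta> A2] a b by auto
    show "if snd (PImp A B, w') = x then IncL x \<Delta> \<or> slf (tcx dk bk x \<Delta>) (tn dk bk (fst (PImp A B, w'))) (tn dk bk C)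
             else (ND R \<Delta> A0 (snd (PImp A B, w')) \<longrightarrow> IncL x \<Delta> \<or> sfi (tcx dk bk x \<Delta>) None (tn dk bk C))"
    proof (cases "w' = x")
      case True
      have IHr: "\<forall>(\<Delta>::('a,'w) uctx) B0. \<Gamma> = polc \<Delta> \<longrightarrow> lnk x \<Delta> dk bk \<longrightarrow> A = polp B0 \<longrightarrow>
          IncL x \<Delta> \<or> srf (tcx dk bk x \<Delta>) (tp dk bk A)"
        using ImpL True by blast
      have "IncL x \<Delta> \<or> srf (tcx dk bk x \<Delta>) (tp dk bk A)" using IHr[rule_format, of \<Delta> A1] a b by auto
      then show ?thesis using ih2 True by (auto intro: sImpL)
    next
      case False
      show ?thesis
      proof (simp only: snd_conv False if_False, intro impI)
        assume d: "ND R \<Delta> A0 w'"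
        have xw: "R\<^sup>+\<^sup>+ x w'" using rt_neq a(5) False by simp
        have "finv R (Ofoc x) \<Gamma> None (Up A) w'" using ImpL(1) by (rule UpR)
        then have "FInv R \<Gamma> (Up A) w'" by (rule foc_agree1[OF tranclp_into_rtranclp[OF xw]])
        then have "ND R \<Delta> A1 w'" using IH[OF xw, of \<Delta> A1] a(1) b by auto
        then have "ND R \<Delta> A2 w'" using d b nd_impE'[of \<Delta> A1 A2 w'] by simp
        then show "IncL x \<Delta> \<or> sfi (tcx dk bk x \<Delta>) None (tn dk bk C)" using ih2 False by auto
      qed
    qed
  qed
qed


section \<open>From the single-world calculus to the focused calculus\<close>

lemma R2:
  assumes IH: "\<And>y (\<Delta>::('a, 'w) uctx) B. R\<^sup>+\<^sup>+ x y \<Longrightarrow>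
     (FInv R (polc \<Delta>) (poln B) y \<longleftrightarrow> ND R \<Delta> B y) \<and> (FInv R (polc \<Delta>) (Up (polp B)) y \<longleftrightarrow> ND R \<Delta> B y)"
  shows "srf G s \<Longrightarrow> \<forall>(\<Delta>::('a, 'w) uctx) B. G = tcx dk bk x \<Delta> \<longrightarrow> lnk x \<Delta> dk bk \<longrightarrow>
            s = tp dk bk (polp B) \<longrightarrow> rfoc R (Ofoc x) (polc \<Delta>) (polp B) x"
    and "sfi G Om t \<Longrightarrow> \<forall>(\<Delta>::('a, 'w) uctx) c. G = tcx dk bk x \<Delta> \<longrightarrow> lnk x \<Delta> dk bk \<longrightarrow> good c \<longrightarrow>
            t = tn dk bk c \<longrightarrow>
            (case Om of None \<Rightarrow> finv R (Ofoc x) (polc \<Delta>) None c x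
             | Some s \<Rightarrow> (\<forall>A. s = tp dk bk (polp A) \<longrightarrow> finv R (Ofoc x) (polc \<Delta>) (Some (polp A, x)) c x))"
    and "slf G n t \<Longrightarrow> \<forall>(\<Delta>::('a, 'w) uctx) A c. G = tcx dk bk x \<Delta> \<longrightarrow> lnk x \<Delta> dk bk \<longrightarrow> good c \<longrightarrow>
            n = tn dk bk (poln A) \<longrightarrow> t = tn dk bk c \<longrightarrow> lfoc R (Ofoc x) (polc \<Delta>) (poln A, x) c x"
proof (induction rule: srf_sfi_slf.inducts)
  case (sQR q G)
  show ?case
  proof (intro allI impI)
    fix \<Delta> :: "('a, 'w) uctx" and B :: "'a uprop"
    assume a: "G = tcx dk bk x \<Delta>" "lnk x \<Delta> dk bk" "SQ q = tp dk bk (polp B)"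
    have B: "B = PAtom q" using tp_polp_SQ[OF a(3)[symmetric]] .
    obtain B' where "(B', x) \<in> set \<Delta>" "SQ q = tp dk bk (polc_elem B')"
      using sQR a(1) tcx_mem by metis
    then have "(PAtom q, x) \<in> set \<Delta>" using tp_polc_SQ by metis
    then have "(PQ q, x) \<in> set (polc \<Delta>)" unfolding polc_mem by force
    then show "rfoc R (Ofoc x) (polc \<Delta>) (polp B) x" using B by (simp add: QR)
  qed
next
  case (sDownR G N)
  show ?case
  proof (intro allI impI)
    fix \<Delta> :: "('a, 'w) uctx" and B :: "'a uprop"
    assume a: "G = tcx dk bk x \<Delta>" "lnk x \<Delta> dk bk" "SDown N = tp dk bk (polp B)"
    have b: "polp B = Down (poln B)" "N = tn dk bk (poln B)" using tp_polp_SDown[OF a(3)[symmetric]] by auto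
    have "finv R (Ofoc x) (polc \<Delta>) None (poln B) x" using sDownR a b good_poln by auto
    then show "rfoc R (Ofoc x) (polc \<Delta>) (polp B) x" using b by (simp add: DownR)
  qed
next
  case (sTR G)
  show ?case
  proof (intro allI impI)
    fix \<Delta> :: "('a, 'w) uctx" and B :: "'a uprop"
    assume a: "G = tcx dk bk x \<Delta>" "lnk x \<Delta> dk bk" "STop = tp dk bk (polp B)"
    have up: "finv R (Ofoc x) (polc \<Delta>) None (Up (polp A)) y" if "R x y" "ND R \<Delta> A y" for A y
    proof -
      have xy: "R\<^sup>+\<^sup>+ x y" using that by simp
      have "FInv R (polc \<Delta>) (Up (polp A)) y" using IH[OF xy] that by blast
      then show ?thesis by (rule foc_agree2[OF tranclp_into_rtranclp[OF xy]])
    qed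
    from tp_polp_STop[OF a(3)[symmetric]]
    show "rfoc R (Ofoc x) (polc \<Delta>) (polp B) x"
    proof (elim disjE exE conjE)
      fix A assume "B = UDia A" "dk (polp A)"
      then obtain y where "R x y" "ND R \<Delta> A y" using a(2) unfolding lnk_def by blast
      then show ?thesis using \<open>B = UDia A\<close> up by (auto intro: DiaR)
    next
      fix A assume "B = UBox A" "bk (polp A)"
      then have "\<forall>y. R x y \<longrightarrow> ND R \<Delta> A y" using a(2) unfolding lnk_def by blast
      then show ?thesis using \<open>B = UBox A\<close> up by (auto intro: BoxR)
    qed
  qed
next
  case (sImpR G A B)
  show ?case
  proof (simp only: option.case, intro allI impI)
    fix \<Delta> :: "('a, 'w) uctx" and c :: "'a pneg"
    assume a: "G = tcx dk bk x \<Delta>" "lnk x \<Delta> dk bk" "good c" "SImp A B = tn dk bk c"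
    obtain B1 B2 where b: "c = PImp (polp B1) (poln B2)" "A = tp dk bk (polp B1)" "B = tn dk bk (poln B2)"
      using good_SImp[OF a(3) a(4)[symmetric]] by blast
    have "finv R (Ofoc x) (polc \<Delta>) (Some (polp B1, x)) (poln B2) x"
      using sImpR a b good_poln by auto
    then show "finv R (Ofoc x) (polc \<Delta>) None c x" using b by (simp add: ImpR)
  qed
next
  case (sL A G C)
  show ?case
  proof (simp only: option.case, intro allI impI)
    fix \<Delta> :: "('a, 'w) uctx" and c :: "'a pneg" and A' :: "'a uprop"
    assume a: "G = tcx dk bk x \<Delta>" "lnk x \<Delta> dk bk" "good c" "C = tn dk bk c" "A = tp dk bk (polp A')"
    have st: "stable_pos (polp A')" using sL(1) a(5) tp_stable by blast
    then have pe: "polc_elem A' = polp A'" by (rule stable_polp)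
    then have "A # G = tcx dk bk x ((A', x) # \<Delta>)" using a(1) a(5) by (simp add: tcx_cons_same)
    moreover have "lnk x ((A', x) # \<Delta>) dk bk" using lnk_cong[OF a(2) later_eq_hyp_x] .
    ultimately have "finv R (Ofoc x) (polc ((A', x) # \<Delta>)) None c x" using sL(3) a(3,4) by auto
    then have "finv R (Ofoc x) ((polp A', x) # polc \<Delta>) None c x" using pe by (simp add: polc_cons)
    then show "finv R (Ofoc x) (polc \<Delta>) (Some (polp A', x)) c x" by (rule L[OF st])
  qed
next
  case (sDownL C N G)
  show ?case
  proof (simp only: option.case, intro allI impI)
    fix \<Delta> :: "('a, 'w) uctx" and c :: "'a pneg"
    assume a: "G = tcx dk bk x \<Delta>" "lnk x \<Delta> dk bk" "good c" "C = tn dk bk c"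
    obtain B' where b: "(B', x) \<in> set \<Delta>" "SDown N = tp dk bk (polc_elem B')"
      using sDownL(2) a(1) tcx_mem by metis
    have c: "polc_elem B' = Down (poln B')" "N = tn dk bk (poln B')"
      using tp_polc_SDown[OF b(2)[symmetric]] by auto
    have l: "lfoc R (Ofoc x) (polc \<Delta>) (poln B', x) c x" using sDownL(4) a c by auto
    have m: "(Down (poln B'), x) \<in> set (polc \<Delta>)" using b c unfolding polc_mem by metis
    have st: "stable_neg c" using sDownL(1) a(4) tn_stable by blast
    show "finv R (Ofoc x) (polc \<Delta>) None c x" by (rule DownL[OF st _ m l]) simp
  qed
next
  case (sBotL G C)
  show ?case
  proof (simp only: option.case, intro allI impI)
    fix \<Delta> :: "('a, 'w) uctx" and c :: "'a pneg" and A :: "'a uprop"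
    assume a: "G = tcx dk bk x \<Delta>" "lnk x \<Delta> dk bk" "good c" "C = tn dk bk c" "SBot = tp dk bk (polp A)"
    from tp_polp_SBot[OF a(5)[symmetric]]
    show "finv R (Ofoc x) (polc \<Delta>) (Some (polp A, x)) c x"
    proof (elim disjE exE conjE)
      assume "A = UBot" then show ?thesis by (simp add: BotL)
    next
      fix A' assume A: "A = UDia A'" "\<not> dk (polp A')"
      have "\<forall>w. R x w \<longrightarrow> Ofoc x (polc \<Delta>) (Up (polp A')) w \<longrightarrow> finv R (Ofoc x) (polc \<Delta>) None c x"
      proof (intro allI impI)
        fix w assume xw: "R x w" and o: "Ofoc x (polc \<Delta>) (Up (polp A')) w"
        have "ND R \<Delta> A' w" using o IH[of w \<Delta> A'] unfolding Ofoc_def by blast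
        then have False using A a(2) xw unfolding lnk_def by blast
        then show "finv R (Ofoc x) (polc \<Delta>) None c x" ..
      qed
      then show ?thesis using A by (simp add: DiaL)
    next
      fix A' assume A: "A = UBox A'" "\<not> bk (polp A')"
      have "(\<forall>w. R x w \<longrightarrow> Ofoc x (polc \<Delta>) (Up (polp A')) w) \<longrightarrow> finv R (Ofoc x) (polc \<Delta>) None c x"
      proof
        assume o: "\<forall>w. R x w \<longrightarrow> Ofoc x (polc \<Delta>) (Up (polp A')) w"
        have "\<forall>w. R x w \<longrightarrow> ND R \<Delta> A' w" using o IH unfolding Ofoc_def by blast
        then have False using A a(2) unfolding lnk_def by blast
        then show "finv R (Ofoc x) (polc \<Delta>) None c x" ..
      qed
      then show ?thesis using A by (simp add: BoxL)
    qed
  qed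
next
  case (sTL G C)
  show ?case
  proof (simp only: option.case, intro allI impI)
    fix \<Delta> :: "('a, 'w) uctx" and c :: "'a pneg" and A :: "'a uprop"
    assume a: "G = tcx dk bk x \<Delta>" "lnk x \<Delta> dk bk" "good c" "C = tn dk bk c" "STop = tp dk bk (polp A)"
    have f: "finv R (Ofoc x) (polc \<Delta>) None c x" using sTL a by auto
    from tp_polp_STop[OF a(5)[symmetric]]
    show "finv R (Ofoc x) (polc \<Delta>) (Some (polp A, x)) c x"
    proof (elim disjE exE conjE)
      fix A' assume "A = UDia A'"
      then show ?thesis using f by (simp add: DiaL)
    next
      fix A' assume "A = UBox A'"
      then show ?thesis using f by (simp add: BoxL)
    qed
  qed
next
  case (sUpR G A)
  show ?case
  proof (simp only: option.case, intro allI impI)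
    fix \<Delta> :: "('a, 'w) uctx" and c :: "'a pneg"
    assume a: "G = tcx dk bk x \<Delta>" "lnk x \<Delta> dk bk" "good c" "SUp A = tn dk bk c"
    obtain B where b: "c = Up (polp B)" "A = tp dk bk (polp B)" using good_SUp[OF a(3) a(4)[symmetric]] by blast
    have "rfoc R (Ofoc x) (polc \<Delta>) (polp B) x" using sUpR a b by auto
    then show "finv R (Ofoc x) (polc \<Delta>) None c x" using b by (simp add: UpR)
  qed
next
  case (sQL G q)
  show ?case
  proof (intro allI impI)
    fix \<Delta> :: "('a, 'w) uctx" and A :: "'a uprop" and c :: "'a pneg"
    assume a: "G = tcx dk bk x \<Delta>" "lnk x \<Delta> dk bk" "good c" "SNQ q = tn dk bk (poln A)" "SNQ q = tn dk bk c"
    have "A = NAtom q" by (rule tn_poln_SNQ[OF a(4)[symmetric]])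
    moreover have "c = NQ q" by (rule good_SNQ[OF a(3) a(5)[symmetric]])
    ultimately show "lfoc R (Ofoc x) (polc \<Delta>) (poln A, x) c x" by (simp add: QL)
  qed
next
  case (sUpL G A C)
  show ?case
  proof (intro allI impI)
    fix \<Delta> :: "('a, 'w) uctx" and A0 :: "'a uprop" and c :: "'a pneg"
    assume a: "G = tcx dk bk x \<Delta>" "lnk x \<Delta> dk bk" "good c" "SUp A = tn dk bk (poln A0)" "C = tn dk bk c"
    have b: "poln A0 = Up (polp A0)" "A = tp dk bk (polp A0)" using tn_poln_SUp[OF a(4)[symmetric]] by auto
    have "finv R (Ofoc x) (polc \<Delta>) (Some (polp A0, x)) c x" using sUpL a b by auto
    then show "lfoc R (Ofoc x) (polc \<Delta>) (poln A0, x) c x" using b by (simp add: UpL)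
  qed
next
  case (sImpL G A B C)
  show ?case
  proof (intro allI impI)
    fix \<Delta> :: "('a, 'w) uctx" and A0 :: "'a uprop" and c :: "'a pneg"
    assume a: "G = tcx dk bk x \<Delta>" "lnk x \<Delta> dk bk" "good c" "SImp A B = tn dk bk (poln A0)" "C = tn dk bk c"
    obtain A1 A2 where b: "A0 = UImp A1 A2" "A = tp dk bk (polp A1)" "B = tn dk bk (poln A2)"
      using tn_poln_SImp[OF a(4)[symmetric]] by blast
    have r: "rfoc R (Ofoc x) (polc \<Delta>) (polp A1) x" using sImpL a b by auto
    have l: "lfoc R (Ofoc x) (polc \<Delta>) (poln A2, x) c x" using sImpL a b by auto
    show "lfoc R (Ofoc x) (polc \<Delta>) (poln A0, x) c x" using ImpL[OF r l] b by simp
  qed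
qed

inductive_cases rfocBotE: "rfoc R P \<Gamma> PBot w"

lemma explode_trans:
  shows "rfoc R P \<Gamma> a u \<Longrightarrow> True"
    and "finv R P \<Gamma> Om g u \<Longrightarrow> g = Up PBot \<Longrightarrow> R\<^sup>*\<^sup>* x u \<Longrightarrow> (\<forall>a w1. Om = Some (a, w1) \<longrightarrow> R\<^sup>*\<^sup>* x w1)
         \<Longrightarrow> stable_neg C \<Longrightarrow> finv R P \<Gamma> Om C x"
    and "lfoc R P \<Gamma> F g u \<Longrightarrow> g = Up PBot \<Longrightarrow> R\<^sup>*\<^sup>* x u \<Longrightarrow> R\<^sup>*\<^sup>* x (snd F) \<Longrightarrow> stable_neg C
         \<Longrightarrow> lfoc R P \<Gamma> F C x"
proof (induction rule: rfoc_finv_lfoc.inducts)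
  case (DownL C' w w' A \<Gamma>)
  have xw: "R\<^sup>*\<^sup>* x w'" using DownL by (meson rtranclp_trans)
  then have l: "lfoc R P \<Gamma> (A, w') C x" using DownL by simp
  show ?case by (rule rfoc_finv_lfoc.DownL) (use DownL l xw in auto)
next
  case (UpR \<Gamma> A w)
  then show ?case by (auto elim: rfocBotE)
next
  case (DiaL w' \<Gamma> A C' w'')
  then show ?case by (auto intro!: rfoc_finv_lfoc.DiaL)
next
  case (BoxL w' \<Gamma> A C' w'')
  then show ?case by (auto intro!: rfoc_finv_lfoc.BoxL)
qed (auto intro: rfoc_finv_lfoc.intros)

lemma explode_stable:
  assumes IH: "\<And>y (\<Delta>::('a, 'w) uctx) B. R\<^sup>+\<^sup>+ x y \<Longrightarrow>
     (FInv R (polc \<Delta>) (poln B) y \<longleftrightarrow> ND R \<Delta> B y) \<and> (FInv R (polc \<Delta>) (Up (polp B)) y \<longleftrightarrow> ND R \<Delta> B y)"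
  assumes "IncL x (\<Delta>::('a, 'w) uctx)" "stable_neg c"
  shows "finv R (Ofoc x) (polc \<Delta>) None c x"
proof -
  obtain u where u: "R\<^sup>+\<^sup>+ x u" "ND R \<Delta> UBot u" using assms(2) unfolding IncL_def by blast
  have "FInv R (polc \<Delta>) (poln UBot) u" using IH[OF u(1)] u(2) by blast
  then have "finv R (Ofoc x) (polc \<Delta>) None (Up PBot) u"
    using foc_agree2[OF tranclp_into_rtranclp[OF u(1)]] by simp
  then show ?thesis using explode_trans(2) u(1) assms(3) tranclp_into_rtranclp by fastforce
qed

lemma explode_IncL:
  assumes IH: "\<And>y (\<Delta>::('a, 'w) uctx) B. R\<^sup>+\<^sup>+ x y \<Longrightarrow>
     (FInv R (polc \<Delta>) (poln B) y \<longleftrightarrow> ND R \<Delta> B y) \<and> (FInv R (polc \<Delta>) (Up (polp B)) y \<longleftrightarrow> ND R \<Delta> B y)"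
  shows "\<forall>\<Delta>::('a, 'w) uctx. IncL x \<Delta> \<longrightarrow> finv R (Ofoc x) (polc \<Delta>) None (poln B) x"
proof (induction B)
  case (UImp B1 B2)
  show ?case
  proof (intro allI impI)
    fix \<Delta> :: "('a, 'w) uctx" assume inc: "IncL x \<Delta>"
    have "finv R (Ofoc x) (polc \<Delta>) (Some (polp B1, x)) (poln B2) x"
    proof (cases B1)
      case UBot then show ?thesis by (simp add: BotL)
    next
      case (UDia A) then show ?thesis using UImp(2) inc by (simp add: DiaL)
    next
      case (UBox A) then show ?thesis using UImp(2) inc by (simp add: BoxL)
    next
      case (PAtom q)
      have "IncL x ((B1, x) # \<Delta>)" using inc IncL_cong[OF later_eq_hyp_x] by blast
      then have "finv R (Ofoc x) (polc ((B1, x) # \<Delta>)) None (poln B2) x" using UImp(2) by blast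
      then show ?thesis using PAtom by (simp add: polc_cons L)
    next
      case (NAtom q)
      have "IncL x ((B1, x) # \<Delta>)" using inc IncL_cong[OF later_eq_hyp_x] by blast
      then have "finv R (Ofoc x) (polc ((B1, x) # \<Delta>)) None (poln B2) x" using UImp(2) by blast
      then show ?thesis using NAtom by (simp add: polc_cons L)
    next
      case (UImp C1 C2)
      have "IncL x ((B1, x) # \<Delta>)" using inc IncL_cong[OF later_eq_hyp_x] by blast
      then have "finv R (Ofoc x) (polc ((B1, x) # \<Delta>)) None (poln B2) x" using UImp.IH(2) by blast
      then show ?thesis using UImp by (simp add: polc_cons L)
    qed
    then show "finv R (Ofoc x) (polc \<Delta>) None (poln (UImp B1 B2)) x" by (simp add: ImpR)
  qed
qed (auto intro: explode_stable[OF IH])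

lemma main: "\<forall>(\<Delta>::('a, 'w) uctx) B. (FInv R (polc \<Delta>) (poln B) x \<longleftrightarrow> ND R \<Delta> B x) \<and>
                 (FInv R (polc \<Delta>) (Up (polp B)) x \<longleftrightarrow> ND R \<Delta> B x)"
proof (induction x rule: wf_ind)
  case (1 x)
  have IH: "\<And>y (\<Delta>::('a, 'w) uctx) B. R\<^sup>+\<^sup>+ x y \<Longrightarrow>
     (FInv R (polc \<Delta>) (poln B) y \<longleftrightarrow> ND R \<Delta> B y) \<and> (FInv R (polc \<Delta>) (Up (polp B)) y \<longleftrightarrow> ND R \<Delta> B y)"
    using 1 by blast
  show ?case
  proof (intro allI)
    fix \<Delta> :: "('a, 'w) uctx" and B :: "'a uprop"
    define dk where "dk = (\<lambda>a. \<exists>A. a = polp A \<and> (\<exists>y. R x y \<and> ND R \<Delta> A y))"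
    define bk where "bk = (\<lambda>a. \<exists>A. a = polp A \<and> (\<forall>y. R x y \<longrightarrow> ND R \<Delta> A y))"
    have lk: "lnk x \<Delta> dk bk" unfolding lnk_def dk_def bk_def using polp_inj by blast
    have r1: "IncL x \<Delta> \<or> sfi (tcx dk bk x \<Delta>) None (tn dk bk c)"
      if "FInv R (polc \<Delta>) c x" "good c" for c
    proof -
      have f: "finv R (Ofoc x) (polc \<Delta>) None c x" using that(1) unfolding foc_unfold .
      have "\<forall>(\<Delta>'::('a, 'w) uctx). polc \<Delta> = polc \<Delta>' \<longrightarrow> lnk x \<Delta>' dk bk \<longrightarrow> good c \<longrightarrow>
            (case None of None \<Rightarrow> IncL x \<Delta>' \<or> sfi (tcx dk bk x \<Delta>') None (tn dk bk c)
             | Some (a, w1) \<Rightarrow> R\<^sup>*\<^sup>* x w1 \<longrightarrow> (\<forall>A. a = polp A \<longrightarrow>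
                (if w1 = x then IncL x \<Delta>' \<or> sfi (tcx dk bk x \<Delta>') (Some (tp dk bk a)) (tn dk bk c)
                 else (ND R \<Delta>' A w1 \<longrightarrow> IncL x \<Delta>' \<or> sfi (tcx dk bk x \<Delta>') None (tn dk bk c)))))"
        by (rule R1(2)[OF IH f refl])
      then show ?thesis using lk that(2) by simp
    qed
    have r4: "ND R \<Delta> B x" if "IncL x \<Delta> \<or> sfi (tcx dk bk x \<Delta>) None c"
       "c = tn dk bk (poln B) \<or> c = SUp (tp dk bk (polp B))" for c
    proof -
      from that(1) show ?thesis
      proof
        assume "IncL x \<Delta>" then show ?thesis by (rule IncL_ND)
      next
        assume sf: "sfi (tcx dk bk x \<Delta>) None c"
        have "\<forall>(\<Delta>'::('a, 'w) uctx) B'. tcx dk bk x \<Delta> = tcx dk bk x \<Delta>' \<longrightarrow> lnk x \<Delta>' dk bk \<longrightarrow>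
            (c = tn dk bk (poln B') \<or> c = SUp (tp dk bk (polp B'))) \<longrightarrow>
            (case None of None \<Rightarrow> ND R \<Delta>' B' x
             | Some a \<Rightarrow> (\<forall>A. a = tp dk bk (polp A) \<longrightarrow> ND R ((A, x) # \<Delta>') B' x))"
          by (rule R4(2)[OF sf])
        from this[rule_format, OF refl lk that(2)] show ?thesis by simp
      qed
    qed
    have r3: "IncL x \<Delta> \<or> sfi (tcx dk bk x \<Delta>) None (tn dk bk (poln B))" if "ND R \<Delta> B x"
      using R3[OF that[unfolded nd_unfold] refl lk] .
    have r2: "FInv R (polc \<Delta>) c x" if "IncL x \<Delta> \<or> sfi (tcx dk bk x \<Delta>) None (tn dk bk c)" "good c" for c
    proof -
      from that(1) show ?thesis
      proof
        assume inc: "IncL x \<Delta>"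
        from that(2) show ?thesis unfolding good_def
        proof (elim disjE exE)
          fix B' assume "c = poln B'"
          then show ?thesis using explode_IncL[OF IH] inc unfolding foc_unfold by blast
        next
          fix B' assume "c = Up (polp B')"
          then show ?thesis using explode_stable[OF IH inc] unfolding foc_unfold by simp
        qed
      next
        assume sf: "sfi (tcx dk bk x \<Delta>) None (tn dk bk c)"
        have "\<forall>(\<Delta>'::('a, 'w) uctx) c'. tcx dk bk x \<Delta> = tcx dk bk x \<Delta>' \<longrightarrow> lnk x \<Delta>' dk bk \<longrightarrow> good c' \<longrightarrow>
            tn dk bk c = tn dk bk c' \<longrightarrow>
            (case None of None \<Rightarrow> finv R (Ofoc x) (polc \<Delta>') None c' x
             | Some s \<Rightarrow> (\<forall>A. s = tp dk bk (polp A) \<longrightarrow> finv R (Ofoc x) (polc \<Delta>') (Some (polp A, x)) c' x))"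
          by (rule R2(2)[OF IH sf])
        then show ?thesis using lk that(2) unfolding foc_unfold by simp
      qed
    qed
    show "(FInv R (polc \<Delta>) (poln B) x \<longleftrightarrow> ND R \<Delta> B x) \<and>
          (FInv R (polc \<Delta>) (Up (polp B)) x \<longleftrightarrow> ND R \<Delta> B x)"
    proof (intro conjI iffI)
      assume "FInv R (polc \<Delta>) (poln B) x"
      then show "ND R \<Delta> B x" using r1 r4 good_poln by blast
    next
      assume "ND R \<Delta> B x"
      then show "FInv R (polc \<Delta>) (poln B) x" using r3 r2 good_poln by blast
    next
      assume "FInv R (polc \<Delta>) (Up (polp B)) x"
      then have "IncL x \<Delta> \<or> sfi (tcx dk bk x \<Delta>) None (SUp (tp dk bk (polp B)))"
        using r1 good_Up_polp by fastforce
      then show "ND R \<Delta> B x" using r4 by blast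
    next
      assume "ND R \<Delta> B x"
      then have "IncL x \<Delta> \<or> sfi (tcx dk bk x \<Delta>) None (SUp (tp dk bk (polp B)))"
        using r3 sw_shift by blast
      then show "FInv R (polc \<Delta>) (Up (polp B)) x" using r2 good_Up_polp by fastforce
    qed
  qed
qed

end

theorem theorem5:
  fixes R :: "'w \<Rightarrow> 'w \<Rightarrow> bool"
    and \<Gamma> :: "('a, 'w) uctx" and A :: "'a uprop" and w :: 'w
  assumes "wfP (\<lambda>x y. R y x)"
  shows "ND R \<Gamma> A w \<longleftrightarrow> FInv R (polc \<Gamma>) (poln A) w"
  using main[OF assms, of w] by blast

end
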